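(* Let $\theta>0$, $a>0$, and set $M=D_0^2-\theta\Omega$ with $\Omega=D_1^2+x_1^2\xi_n^2$. Then there exist $C>0$ and $\tau_0>0$ such that for every real $s\ge1$, every $\tau\ge\tau_0$, every $\xi_n\in\mathbb{R}$ and every $u\in C_0^\infty(\mathbb{R}^{n+1})$, $$\int_0^\infty W\|Mu\|^2dx_0\ \ge\ C\,W(0)\Big(\tau\langle\xi_n\rangle^{1/s}E_1(u(0))+\tau^3\langle\xi_n\rangle^{3/s}E_0(u(0))\Big)+C\tau^2\int_0^\infty W\langle\xi_n\rangle^{2/s}E_1(u(x_0))\,dx_0+C\tau^4\int_0^\infty W\langle\xi_n\rangle^{4/s}E_0(u(x_0))\,dx_0,$$ where $W=W(x_0)=\exp\big(2\tau\langle\xi_n\rangle^{1/s}(x_0-a)\big)$ and $\langle\xi_n\rangle=\sqrt{1+\xi_n^2}$.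
   Context: Coordinates are $x=(x_0,x_1,x'',x_n)\in\mathbb{R}^{n+1}$, $D_j=-i\partial_{x_j}$. For $u$ one takes the partial Fourier transform $\hat u(x_0,x_1,x'',\xi_n)$ in $x_n$; for fixed $x_0$ and $\xi_n$, $\|\cdot\|$ is the $L^2$ norm in $(x_1,x'')$ of $\hat u$, and operators act on $\hat u$ (so $D_n$ becomes multiplication by $\xi_n$). For $j=0,1$, $E_j(u(x_0))=\|D_0^j\hat u(x_0)\|^2+\|D_1^j\hat u(x_0)\|^2+\|(x_1\xi_n)^j\hat u(x_0)\|^2$. *)

theory Defs
  imports "HOL-Analysis.Analysis"
begin

text \<open>Points of R^(n+1) are tuples (x0, x1, x'', xn) with x'' in a Euclidean space 'a.\<close>

text \<open>Iterated partial (directional) derivatives: iter_partial f vs g means that g is obtained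
  from f by differentiating successively in the directions listed in vs (last element first).\<close>
inductive iter_partial ::
  "('a::euclidean_space \<Rightarrow> 'b::real_normed_vector) \<Rightarrow> 'a list \<Rightarrow> ('a \<Rightarrow> 'b) \<Rightarrow> bool" where
  ip_nil: "iter_partial f [] f"
| ip_cons: "iter_partial f vs g \<Longrightarrow>
     (\<And>x. ((\<lambda>t. g (x + t *\<^sub>R v)) has_vector_derivative g' x) (at 0)) \<Longrightarrow>
     iter_partial f (v # vs) g'"

definition smooth_fun :: "('a::euclidean_space \<Rightarrow> 'b::real_normed_vector) \<Rightarrow> bool" where
  "smooth_fun f \<longleftrightarrow> (\<forall>vs. set vs \<subseteq> Basis \<longrightarrow> (\<exists>g. iter_partial f vs g \<and> continuous_on UNIV g))"

definition C0_inf :: "('a::euclidean_space \<Rightarrow> 'b::real_normed_vector) \<Rightarrow> bool" where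
  "C0_inf f \<longleftrightarrow> smooth_fun f \<and> compact (closure {x. f x \<noteq> 0})"

definition uhat :: "(real \<times> real \<times> 'a::euclidean_space \<times> real \<Rightarrow> complex) \<Rightarrow> real \<Rightarrow> real \<Rightarrow> 'a \<Rightarrow> real \<Rightarrow> complex" where
  "uhat u x0 x1 y \<xi> = (LINT xn|lborel. exp (- \<i> * complex_of_real (xn * \<xi>)) * u (x0, x1, y, xn))"

definition nsq :: "(real \<Rightarrow> 'a::euclidean_space \<Rightarrow> complex) \<Rightarrow> real" where
  "nsq w = (LINT p|lborel. (cmod (w (fst p) (snd p)))\<^sup>2)"

definition D0 :: "(real \<Rightarrow> real \<Rightarrow> 'a \<Rightarrow> complex) \<Rightarrow> real \<Rightarrow> real \<Rightarrow> 'a \<Rightarrow> complex" where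
  "D0 v x0 x1 y = - \<i> * vector_derivative (\<lambda>t. v t x1 y) (at x0)"

definition D1 :: "(real \<Rightarrow> real \<Rightarrow> 'a \<Rightarrow> complex) \<Rightarrow> real \<Rightarrow> real \<Rightarrow> 'a \<Rightarrow> complex" where
  "D1 v x0 x1 y = - \<i> * vector_derivative (\<lambda>t. v x0 t y) (at x1)"

definition Mop :: "real \<Rightarrow> real \<Rightarrow> (real \<Rightarrow> real \<Rightarrow> 'a \<Rightarrow> complex) \<Rightarrow> real \<Rightarrow> real \<Rightarrow> 'a \<Rightarrow> complex" where
  "Mop \<theta> \<xi> v x0 x1 y =
     D0 (D0 v) x0 x1 y - complex_of_real \<theta> *
       (D1 (D1 v) x0 x1 y + complex_of_real ((x1 * \<xi>)\<^sup>2) * v x0 x1 y)"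

text \<open>E_j(u(x0)) = ||D_0^j v(x0)||^2 + ||D_1^j v(x0)||^2 + ||(x1 \<xi>)^j v(x0)||^2 for j = 0, 1.\<close>
definition E0 :: "real \<Rightarrow> (real \<Rightarrow> real \<Rightarrow> 'a::euclidean_space \<Rightarrow> complex) \<Rightarrow> real \<Rightarrow> real" where
  "E0 \<xi> v x0 = nsq (v x0) + nsq (v x0) + nsq (v x0)"

definition E1 :: "real \<Rightarrow> (real \<Rightarrow> real \<Rightarrow> 'a::euclidean_space \<Rightarrow> complex) \<Rightarrow> real \<Rightarrow> real" where
  "E1 \<xi> v x0 = nsq (D0 v x0) + nsq (D1 v x0)
     + nsq (\<lambda>x1 y. complex_of_real (x1 * \<xi>) * v x0 x1 y)"

definition jb :: "real \<Rightarrow> real" where "jb \<xi> = sqrt (1 + \<xi>\<^sup>2)"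

end

theory Submission
  imports Defs
begin

definition NC :: "(real \<Rightarrow> real \<Rightarrow> 'a::euclidean_space \<Rightarrow> 'b::real_normed_vector) \<Rightarrow> bool" where
  "NC f \<longleftrightarrow> continuous_on UNIV (\<lambda>z. f (fst z) (fst (snd z)) (snd (snd z)))
     \<and> (\<exists>R. \<forall>a b c. f a b c \<noteq> 0 \<longrightarrow> norm (a, b, c) \<le> R)"

definition Jint :: "(real \<Rightarrow> real \<Rightarrow> 'a::euclidean_space \<Rightarrow> real) \<Rightarrow> real" where
  "Jint f = (LINT x0:{0<..}|lborel. (LINT p|lborel. f x0 (fst p) (snd p)))"

definition Bint :: "(real \<Rightarrow> 'a::euclidean_space \<Rightarrow> real) \<Rightarrow> real" where
  "Bint g = (LINT p|lborel. g (fst p) (snd p))"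

lemma NC_cont: "NC f \<Longrightarrow> continuous_on UNIV (\<lambda>z. f (fst z) (fst (snd z)) (snd (snd z)))"
  by (simp add: NC_def)

lemma NC_supp: "NC f \<Longrightarrow> \<exists>R. \<forall>a b c. f a b c \<noteq> 0 \<longrightarrow> norm (a, b, c) \<le> R"
  by (simp add: NC_def)

lemma NC_supp_comp:
  assumes "NC f" obtains R where "\<And>a b c. f a b c \<noteq> 0 \<Longrightarrow> \<bar>a\<bar> \<le> R \<and> \<bar>b\<bar> \<le> R \<and> norm c \<le> R \<and> norm (b,c) \<le> R"
proof -
  obtain R where R: "\<And>a b c. f a b c \<noteq> 0 \<Longrightarrow> norm (a, b, c) \<le> R" using NC_supp[OF assms] by blast
  show ?thesis
  proof (rule that)
    fix a b c assume "f a b c \<noteq> 0"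
    hence r: "norm (a,b,c) \<le> R" by (rule R)
    have 1: "\<bar>a\<bar> \<le> norm (a,b,c)" using norm_fst_le[of a "(b,c)"] by simp
    have 2: "norm (b,c) \<le> norm (a,b,c)" using norm_snd_le[of "(b,c)" a] by simp
    have 3: "\<bar>b\<bar> \<le> norm (b,c)" using norm_fst_le[of b c] by simp
    have 4: "norm c \<le> norm (b,c)" using norm_snd_le[of c b] by simp
    show "\<bar>a\<bar> \<le> R \<and> \<bar>b\<bar> \<le> R \<and> norm c \<le> R \<and> norm (b,c) \<le> R" using r 1 2 3 4 by linarith
  qed
qed

lemma NC_slice_p: assumes "NC f" shows "continuous_on UNIV (\<lambda>p. f a (fst p) (snd p))"
proof -
  have "continuous_on UNIV ((\<lambda>z. f (fst z) (fst (snd z)) (snd (snd z))) \<circ> (\<lambda>p. (a, p)))"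
    by (rule continuous_on_compose[OF _ continuous_on_subset[OF NC_cont[OF assms]]]) (auto intro!: continuous_intros)
  thus ?thesis by (simp add: o_def)
qed
lemma NC_slice_0: assumes "NC f" shows "continuous_on UNIV (\<lambda>t. f t b c)"
proof -
  have "continuous_on UNIV ((\<lambda>z. f (fst z) (fst (snd z)) (snd (snd z))) \<circ> (\<lambda>t. (t, b, c)))"
    by (rule continuous_on_compose[OF _ continuous_on_subset[OF NC_cont[OF assms]]]) (auto intro!: continuous_intros)
  thus ?thesis by (simp add: o_def)
qed
lemma NC_slice_1: assumes "NC f" shows "continuous_on UNIV (\<lambda>t. f a t c)"
proof -
  have "continuous_on UNIV ((\<lambda>z. f (fst z) (fst (snd z)) (snd (snd z))) \<circ> (\<lambda>t. (a, t, c)))"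
    by (rule continuous_on_compose[OF _ continuous_on_subset[OF NC_cont[OF assms]]]) (auto intro!: continuous_intros)
  thus ?thesis by (simp add: o_def)
qed

lemma integrable_cont_bdd:
  fixes g :: "'c::euclidean_space \<Rightarrow> 'b::{banach, second_countable_topology}"
  assumes "continuous_on UNIV g" "\<And>z. g z \<noteq> 0 \<Longrightarrow> norm z \<le> R"
  shows "integrable lborel g"
proof -
  have "integrable lborel (\<lambda>x. indicator (cball 0 R) x *\<^sub>R g x)"
    by (rule borel_integrable_compact) (auto intro: continuous_on_subset[OF assms(1)])
  moreover have "(\<lambda>x. indicator (cball 0 R) x *\<^sub>R g x) = g"
    using assms(2) by (force simp: indicator_def fun_eq_iff)
  ultimately show ?thesis by simp
qed

lemma NC_int3:
  fixes f :: "real \<Rightarrow> real \<Rightarrow> 'a::euclidean_space \<Rightarrow> 'b::{banach, second_countable_topology}"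
  assumes "NC f" shows "integrable lborel (\<lambda>z. f (fst z) (fst (snd z)) (snd (snd z)))"
proof -
  obtain R where R: "\<And>a b c. f a b c \<noteq> 0 \<Longrightarrow> norm (a, b, c) \<le> R" using NC_supp[OF assms] by blast
  show ?thesis
    by (rule integrable_cont_bdd[OF NC_cont[OF assms], of R]) (use R in auto)
qed

lemma NC_int_p:
  fixes f :: "real \<Rightarrow> real \<Rightarrow> 'a::euclidean_space \<Rightarrow> 'b::{banach, second_countable_topology}"
  assumes "NC f" shows "integrable lborel (\<lambda>p. f a (fst p) (snd p))"
proof -
  obtain R where R: "\<And>a b c. f a b c \<noteq> 0 \<Longrightarrow> \<bar>a\<bar> \<le> R \<and> \<bar>b\<bar> \<le> R \<and> norm c \<le> R \<and> norm (b,c) \<le> R"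
    using NC_supp_comp[OF assms] by blast
  show ?thesis
    apply (rule integrable_cont_bdd[of _ R])
    apply (rule NC_slice_p[OF assms])
    using R by force
qed

lemma NC_int_1:
  fixes f :: "real \<Rightarrow> real \<Rightarrow> 'a::euclidean_space \<Rightarrow> 'b::{banach, second_countable_topology}"
  assumes "NC f" shows "integrable lborel (\<lambda>t. f a t c)"
proof -
  obtain R where R: "\<And>a b c. f a b c \<noteq> 0 \<Longrightarrow> \<bar>a\<bar> \<le> R \<and> \<bar>b\<bar> \<le> R \<and> norm c \<le> R \<and> norm (b,c) \<le> R"
    using NC_supp_comp[OF assms] by blast
  show ?thesis
    apply (rule integrable_cont_bdd[of _ R])
    apply (rule NC_slice_1[OF assms])
    using R by force
qed

lemma Jint_prod:
  fixes f :: "real \<Rightarrow> real \<Rightarrow> 'a::euclidean_space \<Rightarrow> real"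
  assumes "NC f"
  shows "Jint f = (\<integral>z. indicator {0<..} (fst z) * f (fst z) (fst (snd z)) (snd (snd z)) \<partial>lborel)"
    and "integrable lborel (\<lambda>z. indicator {0<..} (fst z) * f (fst z) (fst (snd z)) (snd (snd z)))"
proof -
  let ?g = "\<lambda>z::real \<times> real \<times> 'a. indicator {0<..} (fst z) * f (fst z) (fst (snd z)) (snd (snd z))"
  have ig: "integrable lborel ?g"
  proof -
    have "integrable lborel (\<lambda>z::real \<times> real \<times> 'a. indicator {z. fst z \<in> {0<..}} z *\<^sub>R f (fst z) (fst (snd z)) (snd (snd z)))"
      by (rule integrable_mult_indicator[OF _ NC_int3[OF assms]]) (auto intro!: borel_open open_Collect_less continuous_intros)
    thus ?thesis by (simp add: indicator_def)
  qed
  thus "integrable lborel ?g" .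
  have ig2: "integrable (lborel \<Otimes>\<^sub>M lborel) (\<lambda>(x0, p). indicator {0<..} x0 * f x0 (fst p) (snd p))"
    using ig by (simp add: lborel_prod split_beta')
  have "Jint f = (\<integral>x0. (\<integral>p. indicator {0<..} x0 * f x0 (fst p) (snd p) \<partial>lborel) \<partial>lborel)"
    by (simp add: Jint_def set_lebesgue_integral_def)
  also have "\<dots> = integral\<^sup>L (lborel \<Otimes>\<^sub>M lborel) (\<lambda>(x0, p). indicator {0<..} x0 * f x0 (fst p) (snd p))"
    by (rule lborel_pair.integral_fst[OF ig2])
  also have "\<dots> = integral\<^sup>L lborel ?g"
    by (simp add: lborel_prod split_beta')
  finally show "Jint f = integral\<^sup>L lborel ?g" .
qed

lemma NC_add: "NC f \<Longrightarrow> NC g \<Longrightarrow> NC (\<lambda>a b c. f a b c + g a b c)"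
  unfolding NC_def
proof (elim conjE exE, intro conjI)
  fix R1 R2 assume "continuous_on UNIV (\<lambda>z. f (fst z) (fst (snd z)) (snd (snd z)))"
    "continuous_on UNIV (\<lambda>z. g (fst z) (fst (snd z)) (snd (snd z)))"
  thus "continuous_on UNIV (\<lambda>z. f (fst z) (fst (snd z)) (snd (snd z)) + g (fst z) (fst (snd z)) (snd (snd z)))"
    by (intro continuous_intros)
  assume "\<forall>a b c. f a b c \<noteq> 0 \<longrightarrow> norm (a, b, c) \<le> R1" "\<forall>a b c. g a b c \<noteq> 0 \<longrightarrow> norm (a, b, c) \<le> R2"
  thus "\<exists>R. \<forall>a b c. f a b c + g a b c \<noteq> 0 \<longrightarrow> norm (a, b, c) \<le> R"
    by (intro exI[of _ "max R1 R2"]) (metis add.right_neutral add_0 max.coboundedI1 max.coboundedI2)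
qed

lemma NC_scaleR_fun: "NC f \<Longrightarrow> continuous_on UNIV h \<Longrightarrow> NC (\<lambda>a b c. h (a, b, c) *\<^sub>R f a b c)"
  unfolding NC_def
proof (elim conjE exE, intro conjI)
  assume "continuous_on UNIV (\<lambda>z. f (fst z) (fst (snd z)) (snd (snd z)))" "continuous_on UNIV h"
  thus "continuous_on UNIV (\<lambda>z. h (fst z, fst (snd z), snd (snd z)) *\<^sub>R f (fst z) (fst (snd z)) (snd (snd z)))"
    by (simp add: continuous_intros)
  fix R assume "\<forall>a b c. f a b c \<noteq> 0 \<longrightarrow> norm (a, b, c) \<le> R"
  thus "\<exists>R. \<forall>a b c. h (a, b, c) *\<^sub>R f a b c \<noteq> 0 \<longrightarrow> norm (a, b, c) \<le> R" by auto
qed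

lemma NC_scaleR: "NC f \<Longrightarrow> NC (\<lambda>a b c. k *\<^sub>R f a b c)"
  using NC_scaleR_fun[of f "\<lambda>_. k"] by (simp add: continuous_intros)

lemma NC_minus: "NC f \<Longrightarrow> NC (\<lambda>a b c. - f a b c)"
  using NC_scaleR[of f "-1"] by simp

lemma NC_diff: "NC f \<Longrightarrow> NC g \<Longrightarrow> NC (\<lambda>a b c. f a b c - g a b c)"
  using NC_add[of f "\<lambda>a b c. - g a b c"] NC_minus[of g] by simp

lemma NC_inner: "NC f \<Longrightarrow> NC g \<Longrightarrow> NC (\<lambda>a b c. inner (f a b c) (g a b c))"
  unfolding NC_def
proof (elim conjE exE, intro conjI)
  assume "continuous_on UNIV (\<lambda>z. f (fst z) (fst (snd z)) (snd (snd z)))"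
    "continuous_on UNIV (\<lambda>z. g (fst z) (fst (snd z)) (snd (snd z)))"
  thus "continuous_on UNIV (\<lambda>z. inner (f (fst z) (fst (snd z)) (snd (snd z))) (g (fst z) (fst (snd z)) (snd (snd z))))"
    by (intro continuous_intros)
  fix R assume "\<forall>a b c. f a b c \<noteq> 0 \<longrightarrow> norm (a, b, c) \<le> R"
  thus "\<exists>R. \<forall>a b c. inner (f a b c) (g a b c) \<noteq> 0 \<longrightarrow> norm (a, b, c) \<le> R" by (intro exI[of _ R]) (metis inner_zero_left)
qed

lemma NC_mult_fun: "NC f \<Longrightarrow> continuous_on UNIV h \<Longrightarrow> NC (\<lambda>a b c. h (a, b, c) * (f a b c :: real))"
  using NC_scaleR_fun[of f h] by simp

lemma NC_cmult: "NC f \<Longrightarrow> NC (\<lambda>a b c. k * (f a b c :: real))"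
  using NC_scaleR[of f k] by simp

lemma Jint_add:
  fixes f g :: "real \<Rightarrow> real \<Rightarrow> 'a::euclidean_space \<Rightarrow> real"
  assumes "NC f" "NC g" shows "Jint (\<lambda>a b c. f a b c + g a b c) = Jint f + Jint g"
  using Jint_prod[OF assms(1)] Jint_prod[OF assms(2)] Jint_prod[OF NC_add[OF assms]]
  by (simp add: distrib_left)

lemma Jint_cmult:
  fixes f :: "real \<Rightarrow> real \<Rightarrow> 'a::euclidean_space \<Rightarrow> real"
  shows "Jint (\<lambda>a b c. k * f a b c) = k * Jint f"
  by (simp add: Jint_def)

lemma Jint_diff:
  fixes f g :: "real \<Rightarrow> real \<Rightarrow> 'a::euclidean_space \<Rightarrow> real"
  assumes "NC f" "NC g" shows "Jint (\<lambda>a b c. f a b c - g a b c) = Jint f - Jint g"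
  using Jint_add[OF assms(1) NC_cmult[OF assms(2), of "-1"]] Jint_cmult[of "-1" g] by simp

lemma Jint_mono:
  fixes f g :: "real \<Rightarrow> real \<Rightarrow> 'a::euclidean_space \<Rightarrow> real"
  assumes "NC f" "NC g" "\<And>a b c. f a b c \<le> g a b c" shows "Jint f \<le> Jint g"
  unfolding Jint_prod[OF assms(1)] Jint_prod[OF assms(2)]
  by (rule integral_mono[OF Jint_prod(2)[OF assms(1)] Jint_prod(2)[OF assms(2)]])
     (auto simp: indicator_def assms(3))

lemma Jint_nonneg:
  fixes f :: "real \<Rightarrow> real \<Rightarrow> 'a::euclidean_space \<Rightarrow> real"
  assumes "\<And>a b c. 0 \<le> f a b c" shows "0 \<le> Jint f"
  unfolding Jint_def set_lebesgue_integral_def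
  by (auto intro!: integral_nonneg_AE AE_I2 mult_nonneg_nonneg integral_nonneg_AE simp: assms)

lemma Bint_add:
  fixes f g :: "real \<Rightarrow> real \<Rightarrow> 'a::euclidean_space \<Rightarrow> real"
  assumes "NC f" "NC g" shows "Bint (\<lambda>b c. f x b c + g x b c) = Bint (f x) + Bint (g x)"
  unfolding Bint_def using NC_int_p[OF assms(1)] NC_int_p[OF assms(2)] by simp

lemma Bint_cmult: "Bint (\<lambda>b c. k * f b c) = k * Bint f"
  by (simp add: Bint_def)

lemma Bint_mono:
  fixes f g :: "real \<Rightarrow> real \<Rightarrow> 'a::euclidean_space \<Rightarrow> real"
  assumes "NC f" "NC g" "\<And>b c. f x b c \<le> g x b c" shows "Bint (f x) \<le> Bint (g x)"
  unfolding Bint_def by (rule integral_mono[OF NC_int_p[OF assms(1)] NC_int_p[OF assms(2)]]) (simp add: assms(3))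

lemma Bint_nonneg: "(\<And>b c. 0 \<le> f b c) \<Longrightarrow> 0 \<le> Bint f"
  unfolding Bint_def by (auto intro!: integral_nonneg_AE)

lemma FT_half:
  fixes F f :: "real \<Rightarrow> real"
  assumes d: "\<And>x. (F has_real_derivative f x) (at x)" and c: "continuous_on UNIV f"
    and s: "\<And>x. f x \<noteq> 0 \<Longrightarrow> \<bar>x\<bar> \<le> R" "\<And>x. F x \<noteq> 0 \<Longrightarrow> \<bar>x\<bar> \<le> R"
  shows "(\<integral>x. indicator {0<..} x * f x \<partial>lborel) = - F 0"
proof -
  define R' where "R' = max R 0 + 1"
  have fm[measurable]: "f \<in> borel_measurable borel" using c by (rule borel_measurable_continuous_onI)
  have "(\<integral>x. indicator {0<..} x * f x \<partial>lborel) = (\<integral>x. f x * indicator {0..R'} x \<partial>lborel)"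
  proof (rule integral_cong_AE)
    show "AE x in lborel. indicator {0<..} x * f x = f x * indicator {0..R'} x"
      using AE_lborel_singleton[of 0]
    proof eventually_elim
      case (elim x)
      show ?case
      proof (cases "x > R'")
        case True
        hence "f x = 0" using s(1)[of x] by (force simp: R'_def)
        thus ?thesis using True by (auto simp: R'_def indicator_def)
      qed (use elim in \<open>auto simp: indicator_def\<close>)
    qed
  qed auto
  also have "\<dots> = F R' - F 0"
    by (rule integral_FTC_Icc_real) (auto simp: R'_def d intro: continuous_on_interior[OF c])
  also have "F R' = 0" using s(2)[of R'] by (force simp: R'_def)
  finally show ?thesis by simp
qed

lemma FT_line:
  fixes F f :: "real \<Rightarrow> real"
  assumes d: "\<And>x. (F has_real_derivative f x) (at x)" and c: "continuous_on UNIV f"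
    and s: "\<And>x. f x \<noteq> 0 \<Longrightarrow> \<bar>x\<bar> \<le> R" "\<And>x. F x \<noteq> 0 \<Longrightarrow> \<bar>x\<bar> \<le> R"
  shows "(\<integral>x. f x \<partial>lborel) = 0"
proof -
  define R' where "R' = max R 0 + 1"
  have "(\<integral>x. f x \<partial>lborel) = (\<integral>x. f x * indicator {-R'..R'} x \<partial>lborel)"
    apply (rule Bochner_Integration.integral_cong[where f=f and g="\<lambda>x. f x * indicator {-R'..R'} x", OF refl])
    subgoal for x by (cases "f x = 0") (use s(1)[of x] in \<open>auto simp: R'_def indicator_def\<close>)
    done
  also have "\<dots> = F R' - F (-R')"
    by (rule integral_FTC_Icc_real) (auto simp: R'_def d intro: continuous_on_interior[OF c])
  also have "F R' = 0" using s(2)[of R'] by (force simp: R'_def)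
  also have "F (-R') = 0" using s(2)[of "-R'"] by (force simp: R'_def)
  finally show ?thesis by simp
qed

lemma FT0:
  fixes G G0 :: "real \<Rightarrow> real \<Rightarrow> 'a::euclidean_space \<Rightarrow> real"
  assumes "NC G" "NC G0" and d: "\<And>a b c. ((\<lambda>t. G t b c) has_real_derivative G0 a b c) (at a)"
  shows "Jint G0 = - Bint (G 0)"
proof -
  obtain R1 where R1: "\<And>a b c. G a b c \<noteq> 0 \<Longrightarrow> \<bar>a\<bar> \<le> R1" using NC_supp_comp[OF assms(1)] by metis
  obtain R2 where R2: "\<And>a b c. G0 a b c \<noteq> 0 \<Longrightarrow> \<bar>a\<bar> \<le> R2" using NC_supp_comp[OF assms(2)] by metis
  have ig: "integrable (lborel \<Otimes>\<^sub>M lborel) (\<lambda>(x0, p). indicator {0<..} x0 * G0 x0 (fst p) (snd p))"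
    using Jint_prod(2)[OF assms(2)] by (simp add: lborel_prod split_beta')
  have "Jint G0 = integral\<^sup>L (lborel \<Otimes>\<^sub>M lborel) (\<lambda>(x0, p). indicator {0<..} x0 * G0 x0 (fst p) (snd p))"
    unfolding Jint_prod[OF assms(2)] by (simp add: lborel_prod split_beta')
  also have "\<dots> = (\<integral>p. (\<integral>x0. indicator {0<..} x0 * G0 x0 (fst p) (snd p) \<partial>lborel) \<partial>lborel)"
    by (rule lborel_pair.integral_snd[OF ig, symmetric])
  also have "\<dots> = (\<integral>p. - G 0 (fst p) (snd p) \<partial>lborel)"
  proof (intro Bochner_Integration.integral_cong refl)
    fix p :: "real \<times> 'a"
    show "(\<integral>x0. indicator {0<..} x0 * G0 x0 (fst p) (snd p) \<partial>lborel) = - G 0 (fst p) (snd p)"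
    proof (rule FT_half[of "\<lambda>t. G t (fst p) (snd p)" "\<lambda>t. G0 t (fst p) (snd p)" "max R1 R2"])
      show "continuous_on UNIV (\<lambda>t. G0 t (fst p) (snd p))" by (rule NC_slice_0[OF assms(2)])
      fix x
      show "((\<lambda>t. G t (fst p) (snd p)) has_real_derivative G0 x (fst p) (snd p)) (at x)" by (rule d)
      show "\<bar>x\<bar> \<le> max R1 R2" if "G0 x (fst p) (snd p) \<noteq> 0" using R2[OF that] by linarith
      show "\<bar>x\<bar> \<le> max R1 R2" if "G x (fst p) (snd p) \<noteq> 0" using R1[OF that] by linarith
    qed
  qed
  finally show ?thesis by (simp add: Bint_def)
qed

lemma FT1:
  fixes G G1 :: "real \<Rightarrow> real \<Rightarrow> 'a::euclidean_space \<Rightarrow> real"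
  assumes "NC G" "NC G1" and d: "\<And>a b c. ((\<lambda>t. G a t c) has_real_derivative G1 a b c) (at b)"
  shows "Jint G1 = 0"
proof -
  obtain R1 where R1: "\<And>a b c. G a b c \<noteq> 0 \<Longrightarrow> \<bar>b\<bar> \<le> R1" using NC_supp_comp[OF assms(1)] by metis
  obtain R2 where R2: "\<And>a b c. G1 a b c \<noteq> 0 \<Longrightarrow> \<bar>b\<bar> \<le> R2" using NC_supp_comp[OF assms(2)] by metis
  have "(LINT p|lborel. G1 x0 (fst p) (snd p)) = 0" for x0
  proof -
    have ig: "integrable (lborel \<Otimes>\<^sub>M lborel) (\<lambda>(b, c). G1 x0 b c)"
      using NC_int_p[OF assms(2), of x0] by (simp add: lborel_prod split_beta')
    have "(LINT p|lborel. G1 x0 (fst p) (snd p)) = integral\<^sup>L (lborel \<Otimes>\<^sub>M lborel) (\<lambda>(b, c). G1 x0 b c)"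
      by (simp add: lborel_prod split_beta')
    also have "\<dots> = (\<integral>c. (\<integral>b. G1 x0 b c \<partial>lborel) \<partial>lborel)"
      by (rule lborel_pair.integral_snd[OF ig, symmetric])
    also have "\<dots> = (\<integral>c. 0 \<partial>lborel)"
    proof -
      have "(\<integral>b. G1 x0 b c \<partial>lborel) = 0" for c :: 'a
      proof (rule FT_line[of "\<lambda>t. G x0 t c" "\<lambda>t. G1 x0 t c" "max R1 R2"])
        show "continuous_on UNIV (\<lambda>t. G1 x0 t c)" by (rule NC_slice_1[OF assms(2)])
        fix x
        show "((\<lambda>t. G x0 t c) has_real_derivative G1 x0 x c) (at x)" by (rule d)
        show "\<bar>x\<bar> \<le> max R1 R2" if "G1 x0 x c \<noteq> 0" using R2[OF that] by linarith
        show "\<bar>x\<bar> \<le> max R1 R2" if "G x0 x c \<noteq> 0" using R1[OF that] by linarith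
      qed
      thus ?thesis by simp
    qed
    finally show ?thesis by simp
  qed
  thus ?thesis by (simp add: Jint_def)
qed

lemma final_arith:
  fixes JA J0 Jw J1 Jq Bd bb JAw W0 E1B E0B T2 T3 LHS L \<theta> :: real
  assumes L: "L > 0" and th: "\<theta> > 0"
    and nn: "JA \<ge> 0" "J0 \<ge> 0" "Jw \<ge> 0" "J1 \<ge> 0" "Jq \<ge> 0" "Bd \<ge> 0"
    and LHS: "LHS = JA + 4 * L\<^sup>2 * J0 + 2 * L * Bd"
    and bb: "bb \<le> Bd / (2 * L)"
    and JAw: "JAw = bb + J0 - L\<^sup>2 * Jw - \<theta> * J1 - Jq"
    and N1: "- JAw \<le> JA / (2 * L\<^sup>2) + L\<^sup>2 / 2 * Jw"
    and X1: "W0 * E1B \<le> (2 + 1 / \<theta>) * Bd"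
    and X0: "W0 * E0B \<le> 3 * Bd / L\<^sup>2"
    and T2: "T2 \<le> 2 * J0 + 2 * L\<^sup>2 * Jw + J1 + (1 / \<theta>) * Jq"
    and T3: "T3 = 3 * Jw"
  shows "LHS \<ge> (1 / (8 + 2 / \<theta>)) * W0 * (L * E1B + L ^ 3 * E0B)
       + (1 / (8 + 2 / \<theta>)) * L\<^sup>2 * T2 + (1 / (8 + 2 / \<theta>)) * L ^ 4 * T3"
proof -
  have L2: "L\<^sup>2 > 0" using L by simp
  have h: "L\<^sup>2 * Jw / 2 + \<theta> * J1 + Jq \<le> Bd / (2 * L) + J0 + JA / (2 * L\<^sup>2)"
    using bb JAw N1 by linarith
  have "2 * L\<^sup>2 * (L\<^sup>2 * Jw / 2 + \<theta> * J1 + Jq) \<le> 2 * L\<^sup>2 * (Bd / (2 * L) + J0 + JA / (2 * L\<^sup>2))"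
    using h L2 by (intro mult_left_mono) auto
  also have "\<dots> = L * Bd + 2 * L\<^sup>2 * J0 + JA"
    using L by (simp add: field_simps power2_eq_square)
  finally have Z0: "L ^ 4 * Jw + 2 * L\<^sup>2 * \<theta> * J1 + 2 * L\<^sup>2 * Jq \<le> L * Bd + 2 * L\<^sup>2 * J0 + JA"
    by (simp add: algebra_simps power2_eq_square power4_eq_xxxx)
  have LB: "L * Bd \<ge> 0" "L\<^sup>2 * J0 \<ge> 0" using L nn by auto
  have Z: "L ^ 4 * Jw + 2 * L\<^sup>2 * \<theta> * J1 + 2 * L\<^sup>2 * Jq \<le> LHS" using Z0 LHS LB by linarith
  have Zp: "L ^ 4 * Jw \<ge> 0" "L\<^sup>2 * \<theta> * J1 \<ge> 0" "L\<^sup>2 * Jq \<ge> 0" using L th nn by auto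
  define K where "K = 8 + 2 / \<theta>"
  have Kp: "K > 0" using th by (simp add: K_def add_pos_pos)
  have b1: "L * (W0 * E1B) + L ^ 3 * (W0 * E0B) \<le> (5 + 1 / \<theta>) * (L * Bd)"
  proof -
    have "L * (W0 * E1B) \<le> L * ((2 + 1 / \<theta>) * Bd)" using X1 L by (intro mult_left_mono) auto
    moreover have "L ^ 3 * (W0 * E0B) \<le> L ^ 3 * (3 * Bd / L\<^sup>2)" using X0 L by (intro mult_left_mono) auto
    moreover have "L ^ 3 * (3 * Bd / L\<^sup>2) = 3 * (L * Bd)" using L by (simp add: field_simps power2_eq_square power3_eq_cube)
    ultimately show ?thesis by (simp add: algebra_simps)
  qed
  have b1': "(5 + 1 / \<theta>) * (L * Bd) \<le> (5 + 1 / \<theta>) * (LHS / 2)"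
    using LHS nn LB th by (intro mult_left_mono) (auto simp: add_nonneg_nonneg)
  have b2: "L\<^sup>2 * T2 \<le> 2 * (L\<^sup>2 * J0) + 2 * (L ^ 4 * Jw) + (1 / (2 * \<theta>)) * (2 * L\<^sup>2 * \<theta> * J1) + (1 / (2 * \<theta>)) * (2 * L\<^sup>2 * Jq)"
  proof -
    have "L\<^sup>2 * T2 \<le> L\<^sup>2 * (2 * J0 + 2 * L\<^sup>2 * Jw + J1 + (1 / \<theta>) * Jq)" using T2 L2 by (intro mult_left_mono) auto
    also have "\<dots> = 2 * (L\<^sup>2 * J0) + 2 * (L ^ 4 * Jw) + (1 / (2 * \<theta>)) * (2 * L\<^sup>2 * \<theta> * J1) + (1 / (2 * \<theta>)) * (2 * L\<^sup>2 * Jq)"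
      using th by (simp add: field_simps power2_eq_square power4_eq_xxxx)
    finally show ?thesis .
  qed
  have z1: "(1 / (2 * \<theta>)) * (2 * L\<^sup>2 * \<theta> * J1) + (1 / (2 * \<theta>)) * (2 * L\<^sup>2 * Jq) \<le> (1 / (2 * \<theta>)) * LHS"
  proof -
    have "2 * L\<^sup>2 * \<theta> * J1 + 2 * L\<^sup>2 * Jq \<le> LHS" using Z Zp by linarith
    hence "(1 / (2 * \<theta>)) * (2 * L\<^sup>2 * \<theta> * J1 + 2 * L\<^sup>2 * Jq) \<le> (1 / (2 * \<theta>)) * LHS"
      using th by (intro mult_left_mono) auto
    thus ?thesis by (simp add: distrib_left)
  qed
  have z2: "L\<^sup>2 * J0 \<le> LHS / 4" using LHS nn LB by linarith
  have z3: "L ^ 4 * Jw \<le> LHS" using Z Zp by linarith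
  have tot: "L * (W0 * E1B) + L ^ 3 * (W0 * E0B) + L\<^sup>2 * T2 + L ^ 4 * T3 \<le> K * LHS"
  proof -
    have "L * (W0 * E1B) + L ^ 3 * (W0 * E0B) + L\<^sup>2 * T2 + L ^ 4 * T3
        \<le> (5 + 1 / \<theta>) * (LHS / 2) + (LHS / 2 + 2 * LHS + (1 / (2 * \<theta>)) * LHS) + 3 * LHS"
      using b1 b1' b2 z1 z2 z3 T3 by (simp add: algebra_simps) 
    also have "\<dots> = (8 + 1 / \<theta>) * LHS" using th by (simp add: field_simps)
    also have "\<dots> \<le> K * LHS"
    proof (rule mult_right_mono)
      show "8 + 1 / \<theta> \<le> K" unfolding K_def using th by (simp add: field_simps)
      show "0 \<le> LHS" using LHS nn LB by linarith
    qed
    finally show ?thesis .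
  qed
  have "(1 / K) * (L * (W0 * E1B) + L ^ 3 * (W0 * E0B) + L\<^sup>2 * T2 + L ^ 4 * T3) \<le> (1 / K) * (K * LHS)"
    using tot Kp by (intro mult_left_mono) auto
  thus ?thesis using Kp unfolding K_def[symmetric] by (simp add: algebra_simps)
qed

lemma HVD_inner:
  assumes "(f has_vector_derivative f') (at x)" "(g has_vector_derivative g') (at x)"
  shows "((\<lambda>t. inner (f t) (g t)) has_real_derivative (inner f' (g x) + inner (f x) g')) (at x)"
  using bounded_bilinear.has_vector_derivative[OF bounded_bilinear_inner assms]
  unfolding has_real_derivative_iff_has_vector_derivative by (simp add: add.commute)

lemma NC_e: "NC f \<Longrightarrow> NC (\<lambda>a b c. exp (L * (a - al)) *\<^sub>R f a b c)"
  using NC_scaleR_fun[of f "\<lambda>z. exp (L * (fst z - al))"] by (simp add: continuous_intros)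

lemma NC_q: "NC f \<Longrightarrow> NC (\<lambda>a b c. (k * (b * \<xi>)\<^sup>2) *\<^sub>R f a b c)"
  using NC_scaleR_fun[of f "\<lambda>z. k * (fst (snd z) * \<xi>)\<^sup>2"] by (simp add: continuous_intros)

lemma NC_qr: "NC f \<Longrightarrow> NC (\<lambda>a b c. (k * (b * \<xi>)\<^sup>2) * (f a b c :: real))"
  using NC_q[of f] by simp

lemma NC_inner_self: "NC f \<Longrightarrow> NC (\<lambda>a b c. inner (f a b c) (f a b c))"
  by (rule NC_inner)

lemmas NC_intros = NC_add NC_diff NC_minus NC_scaleR NC_cmult NC_inner NC_e NC_q NC_qr

lemma amgm_inner:
  fixes x y :: "'b::real_inner"
  assumes "k > 0" shows "inner x y \<le> inner x x / (2 * k) + k / 2 * inner y y"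
proof -
  have "0 \<le> inner (x - k *\<^sub>R y) (x - k *\<^sub>R y)" by simp
  also have "\<dots> = inner x x - 2 * k * inner x y + k\<^sup>2 * inner y y"
    by (simp add: inner_diff_left inner_diff_right inner_commute power2_eq_square algebra_simps)
  finally have "2 * k * inner x y \<le> inner x x + k\<^sup>2 * inner y y" by simp
  hence "inner x y \<le> (inner x x + k\<^sup>2 * inner y y) / (2 * k)" using assms by (simp add: field_simps)
  also have "\<dots> = inner x x / (2 * k) + k / 2 * inner y y" using assms by (simp add: field_simps power2_eq_square)
  finally show ?thesis .
qed

lemma diff_sq_inner:
  fixes x y :: "'b::real_inner"
  shows "inner (x - y) (x - y) \<le> 2 * inner x x + 2 * inner y y"
proof -
  have "0 \<le> inner (x + y) (x + y)" by simp
  thus ?thesis by (simp add: inner_diff_left inner_diff_right inner_add_left inner_add_right inner_commute)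
qed

lemma Jint_lc6:
  fixes f1 f2 f3 f4 f5 f6 :: "real \<Rightarrow> real \<Rightarrow> 'a::euclidean_space \<Rightarrow> real"
  assumes "NC f1" "NC f2" "NC f3" "NC f4" "NC f5" "NC f6"
  shows "Jint (\<lambda>a b c. k1 * f1 a b c + k2 * f2 a b c + k3 * f3 a b c + k4 * f4 a b c + k5 * f5 a b c + k6 * f6 a b c)
    = k1 * Jint f1 + k2 * Jint f2 + k3 * Jint f3 + k4 * Jint f4 + k5 * Jint f5 + k6 * Jint f6"
proof -
  note n = NC_cmult[OF assms(1), of k1] NC_cmult[OF assms(2), of k2] NC_cmult[OF assms(3), of k3]
    NC_cmult[OF assms(4), of k4] NC_cmult[OF assms(5), of k5] NC_cmult[OF assms(6), of k6]
  note n2 = NC_add[OF n(1) n(2)]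
  note n3 = NC_add[OF n2 n(3)]
  note n4 = NC_add[OF n3 n(4)]
  note n5 = NC_add[OF n4 n(5)]
  show ?thesis
    by (simp only: Jint_add[OF n5 n(6)] Jint_add[OF n4 n(5)] Jint_add[OF n3 n(4)] Jint_add[OF n2 n(3)]
        Jint_add[OF n(1) n(2)] Jint_cmult)
qed

lemma Jint_lc4:
  fixes f1 f2 f3 f4 :: "real \<Rightarrow> real \<Rightarrow> 'a::euclidean_space \<Rightarrow> real"
  assumes "NC f1" "NC f2" "NC f3" "NC f4"
  shows "Jint (\<lambda>a b c. k1 * f1 a b c + k2 * f2 a b c + k3 * f3 a b c + k4 * f4 a b c)
    = k1 * Jint f1 + k2 * Jint f2 + k3 * Jint f3 + k4 * Jint f4"
proof -
  note n = NC_cmult[OF assms(1), of k1] NC_cmult[OF assms(2), of k2] NC_cmult[OF assms(3), of k3]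
    NC_cmult[OF assms(4), of k4]
  note n2 = NC_add[OF n(1) n(2)]
  note n3 = NC_add[OF n2 n(3)]
  show ?thesis
    by (simp only: Jint_add[OF n3 n(4)] Jint_add[OF n2 n(3)] Jint_add[OF n(1) n(2)] Jint_cmult)
qed

lemma core:
  fixes v v0 v00 v1 v11 v01 :: "real \<Rightarrow> real \<Rightarrow> 'a::euclidean_space \<Rightarrow> complex"
    and al :: real
  assumes nc: "NC v" "NC v0" "NC v00" "NC v1" "NC v11" "NC v01"
    and d0: "\<And>a b c. ((\<lambda>t. v t b c) has_vector_derivative v0 a b c) (at a)"
    and d00: "\<And>a b c. ((\<lambda>t. v0 t b c) has_vector_derivative v00 a b c) (at a)"
    and d1: "\<And>a b c. ((\<lambda>t. v a t c) has_vector_derivative v1 a b c) (at b)"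
    and d11: "\<And>a b c. ((\<lambda>t. v1 a t c) has_vector_derivative v11 a b c) (at b)"
    and d01a: "\<And>a b c. ((\<lambda>t. v1 t b c) has_vector_derivative v01 a b c) (at a)"
    and d01b: "\<And>a b c. ((\<lambda>t. v0 a t c) has_vector_derivative v01 a b c) (at b)"
    and th: "\<theta> > 0" and L: "L > 0"
  defines "W \<equiv> \<lambda>a. exp (2 * L * (a - al))"
  shows "Jint (\<lambda>a b c. W a * (norm (- v00 a b c + \<theta> *\<^sub>R v11 a b c - (\<theta> * (b * \<xi>)\<^sup>2) *\<^sub>R v a b c))\<^sup>2)
     \<ge> (1 / (8 + 2 / \<theta>)) * W 0 * (L * Bint (\<lambda>b c. (norm (v0 0 b c))\<^sup>2 + (norm (v1 0 b c))\<^sup>2 + (b * \<xi>)\<^sup>2 * (norm (v 0 b c))\<^sup>2)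
              + L ^ 3 * Bint (\<lambda>b c. 3 * (norm (v 0 b c))\<^sup>2))
       + (1 / (8 + 2 / \<theta>)) * L\<^sup>2 * Jint (\<lambda>a b c. W a * ((norm (v0 a b c))\<^sup>2 + (norm (v1 a b c))\<^sup>2 + (b * \<xi>)\<^sup>2 * (norm (v a b c))\<^sup>2))
       + (1 / (8 + 2 / \<theta>)) * L ^ 4 * Jint (\<lambda>a b c. W a * (3 * (norm (v a b c))\<^sup>2))"
proof -
  define e where "e = (\<lambda>a::real. exp (L * (a - al)))"
  have We: "W a = e a * e a" for a unfolding W_def e_def by (simp add: exp_add[symmetric] algebra_simps)
  define w where "w = (\<lambda>a b c. e a *\<^sub>R v a b c)"
  define w0 where "w0 = (\<lambda>a b c. e a *\<^sub>R (L *\<^sub>R v a b c + v0 a b c))"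
  define w00 where "w00 = (\<lambda>a b c. e a *\<^sub>R (L\<^sup>2 *\<^sub>R v a b c + (2 * L) *\<^sub>R v0 a b c + v00 a b c))"
  define w1 where "w1 = (\<lambda>a b c. e a *\<^sub>R v1 a b c)"
  define w11 where "w11 = (\<lambda>a b c. e a *\<^sub>R v11 a b c)"
  define w01 where "w01 = (\<lambda>a b c. e a *\<^sub>R (L *\<^sub>R v1 a b c + v01 a b c))"
  define A where "A = (\<lambda>a b c. - w00 a b c - L\<^sup>2 *\<^sub>R w a b c + \<theta> *\<^sub>R w11 a b c - (\<theta> * (b * \<xi>)\<^sup>2) *\<^sub>R w a b c)"
  have ncw: "NC w" "NC w0" "NC w00" "NC w1" "NC w11" "NC w01"
    unfolding w_def w0_def w00_def w1_def w11_def w01_def e_def by (intro NC_intros nc)+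
  have ncA: "NC A" unfolding A_def by (intro NC_intros ncw)
  have de: "(e has_real_derivative L * e a) (at a)" for a
    unfolding e_def by (auto intro!: derivative_eq_intros)
  have Dw: "((\<lambda>t. w t b c) has_vector_derivative w0 a b c) (at a)" for a b c
    unfolding w_def w0_def
    by (rule has_vector_derivative_eq_rhs[OF has_vector_derivative_scaleR[OF de d0]]) (simp add: algebra_simps)
  have Dw0: "((\<lambda>t. w0 t b c) has_vector_derivative w00 a b c) (at a)" for a b c
    unfolding w0_def w00_def
    by (rule has_vector_derivative_eq_rhs[OF has_vector_derivative_scaleR[OF de has_vector_derivative_add[OF has_vector_derivative_scaleR[OF DERIV_const d0] d00]]])
       (simp add: algebra_simps power2_eq_square scaleR_conv_of_real)
  have Dw1: "((\<lambda>t. w1 t b c) has_vector_derivative w01 a b c) (at a)" for a b c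
    unfolding w1_def w01_def
    by (rule has_vector_derivative_eq_rhs[OF has_vector_derivative_scaleR[OF de d01a]]) (simp add: algebra_simps)
  have Ew: "((\<lambda>t. w a t c) has_vector_derivative w1 a b c) (at b)" for a b c
    unfolding w_def w1_def
    by (rule has_vector_derivative_eq_rhs[OF has_vector_derivative_scaleR[OF DERIV_const d1]]) simp
  have Ew1: "((\<lambda>t. w1 a t c) has_vector_derivative w11 a b c) (at b)" for a b c
    unfolding w1_def w11_def
    by (rule has_vector_derivative_eq_rhs[OF has_vector_derivative_scaleR[OF DERIV_const d11]]) simp
  have Ew0: "((\<lambda>t. w0 a t c) has_vector_derivative w01 a b c) (at b)" for a b c
    unfolding w0_def w01_def
    by (rule has_vector_derivative_eq_rhs[OF has_vector_derivative_scaleR[OF DERIV_const has_vector_derivative_add[OF has_vector_derivative_scaleR[OF DERIV_const d1] d01b]]])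
       simp
  define q where "q = (\<lambda>b::real. \<theta> * (b * \<xi>)\<^sup>2)"
  have q0: "q b \<ge> 0" for b unfolding q_def using th by simp
  define Phi where "Phi = (\<lambda>a b c. inner (w0 a b c) (w0 a b c) + L\<^sup>2 * inner (w a b c) (w a b c)
     + \<theta> * inner (w1 a b c) (w1 a b c) + (\<theta> * (b * \<xi>)\<^sup>2) * inner (w a b c) (w a b c))"
  define Phi' where "Phi' = (\<lambda>a b c. 2 * inner (w00 a b c) (w0 a b c) + (2 * L\<^sup>2) * inner (w0 a b c) (w a b c)
     + (2 * \<theta>) * inner (w01 a b c) (w1 a b c) + 2 * ((\<theta> * (b * \<xi>)\<^sup>2) * inner (w0 a b c) (w a b c)))"
  define Rr where "Rr = (\<lambda>a b c. inner (w1 a b c) (w0 a b c))"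
  define Rr' where "Rr' = (\<lambda>a b c. inner (w11 a b c) (w0 a b c) + inner (w1 a b c) (w01 a b c))"
  define S where "S = (\<lambda>a b c. inner (w0 a b c) (w a b c))"
  define S' where "S' = (\<lambda>a b c. inner (w00 a b c) (w a b c) + inner (w0 a b c) (w0 a b c))"
  define T where "T = (\<lambda>a b c. inner (w1 a b c) (w a b c))"
  define T' where "T' = (\<lambda>a b c. inner (w11 a b c) (w a b c) + inner (w1 a b c) (w1 a b c))"
  have ncr: "NC Phi" "NC Phi'" "NC Rr" "NC Rr'" "NC S" "NC S'" "NC T" "NC T'"
    unfolding Phi_def Phi'_def Rr_def Rr'_def S_def S'_def T_def T'_def by (intro NC_intros ncw)+
  have DPhi: "((\<lambda>t. Phi t b c) has_real_derivative Phi' a b c) (at a)" for a b c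
  proof -
    have "((\<lambda>t. Phi t b c) has_real_derivative
      (inner (w00 a b c) (w0 a b c) + inner (w0 a b c) (w00 a b c))
      + L\<^sup>2 * (inner (w0 a b c) (w a b c) + inner (w a b c) (w0 a b c))
      + \<theta> * (inner (w01 a b c) (w1 a b c) + inner (w1 a b c) (w01 a b c))
      + (\<theta> * (b * \<xi>)\<^sup>2) * (inner (w0 a b c) (w a b c) + inner (w a b c) (w0 a b c))) (at a)"
      unfolding Phi_def by (intro DERIV_add DERIV_cmult HVD_inner Dw Dw0 Dw1)
    thus ?thesis unfolding Phi'_def by (simp add: inner_commute algebra_simps)
  qed
  have DS: "((\<lambda>t. S t b c) has_real_derivative S' a b c) (at a)" for a b c
    unfolding S_def S'_def by (rule HVD_inner[OF Dw0 Dw])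
  have DRr: "((\<lambda>t. Rr a t c) has_real_derivative Rr' a b c) (at b)" for a b c
    unfolding Rr_def Rr'_def by (rule HVD_inner[OF Ew1 Ew0])
  have DT: "((\<lambda>t. T a t c) has_real_derivative T' a b c) (at b)" for a b c
    unfolding T_def T'_def by (rule HVD_inner[OF Ew1 Ew])
  have FPhi: "Jint Phi' = - Bint (Phi 0)" by (rule FT0[OF ncr(1,2) DPhi])
  have FS: "Jint S' = - Bint (S 0)" by (rule FT0[OF ncr(5,6) DS])
  have FRr: "Jint Rr' = 0" by (rule FT1[OF ncr(3,4) DRr])
  have FT: "Jint T' = 0" by (rule FT1[OF ncr(7,8) DT])
  have I1: "inner (A a b c + (2 * L) *\<^sub>R w0 a b c) (A a b c + (2 * L) *\<^sub>R w0 a b c)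
     = inner (A a b c) (A a b c) + (4 * L\<^sup>2) * inner (w0 a b c) (w0 a b c) + (- 2 * L) * Phi' a b c + (4 * L * \<theta>) * Rr' a b c" for a b c
  proof -
    have h: "inner (A a b c) (w0 a b c) = - inner (w00 a b c) (w0 a b c) - L\<^sup>2 * inner (w a b c) (w0 a b c)
       + \<theta> * inner (w11 a b c) (w0 a b c) - (\<theta> * (b * \<xi>)\<^sup>2) * inner (w a b c) (w0 a b c)"
      unfolding A_def by (simp add: inner_diff_left inner_add_left)
    show ?thesis unfolding Phi'_def Rr'_def
      by (simp add: h inner_add_left inner_add_right inner_commute algebra_simps power2_eq_square)
  qed
  have I2: "inner (A a b c) (w a b c) = (- 1) * S' a b c + 1 * inner (w0 a b c) (w0 a b c) + (- L\<^sup>2) * inner (w a b c) (w a b c)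
     + \<theta> * T' a b c + (- \<theta>) * inner (w1 a b c) (w1 a b c) + (- 1) * ((\<theta> * (b * \<xi>)\<^sup>2) * inner (w a b c) (w a b c))" for a b c
    unfolding A_def S'_def T'_def by (simp add: inner_diff_left inner_add_left algebra_simps)
  define JA where "JA = Jint (\<lambda>a b c. inner (A a b c) (A a b c))"
  define J0 where "J0 = Jint (\<lambda>a b c. inner (w0 a b c) (w0 a b c))"
  define Jw where "Jw = Jint (\<lambda>a b c. inner (w a b c) (w a b c))"
  define J1 where "J1 = Jint (\<lambda>a b c. inner (w1 a b c) (w1 a b c))"
  define Jq where "Jq = Jint (\<lambda>a b c. (\<theta> * (b * \<xi>)\<^sup>2) * inner (w a b c) (w a b c))"
  define JAw where "JAw = Jint (\<lambda>a b c. inner (A a b c) (w a b c))"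
  define Bd where "Bd = Bint (Phi 0)"
  define bb where "bb = Bint (S 0)"
  note ncs = ncw ncA ncr
  have ncb: "NC (\<lambda>a b c. inner (A a b c) (A a b c))" "NC (\<lambda>a b c. inner (w0 a b c) (w0 a b c))"
     "NC (\<lambda>a b c. inner (w a b c) (w a b c))" "NC (\<lambda>a b c. inner (w1 a b c) (w1 a b c))"
     "NC (\<lambda>a b c. (\<theta> * (b * \<xi>)\<^sup>2) * inner (w a b c) (w a b c))" "NC (\<lambda>a b c. inner (A a b c) (w a b c))"
    by (intro NC_intros ncs)+
  have P: "e a *\<^sub>R (- v00 a b c + \<theta> *\<^sub>R v11 a b c - (\<theta> * (b * \<xi>)\<^sup>2) *\<^sub>R v a b c) = A a b c + (2 * L) *\<^sub>R w0 a b c" for a b c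
    unfolding A_def w_def w0_def w00_def w11_def
    by (simp add: scaleR_conv_of_real algebra_simps power2_eq_square)
  have LHSeq: "Jint (\<lambda>a b c. W a * (norm (- v00 a b c + \<theta> *\<^sub>R v11 a b c - (\<theta> * (b * \<xi>)\<^sup>2) *\<^sub>R v a b c))\<^sup>2)
     = Jint (\<lambda>a b c. inner (A a b c) (A a b c) + (4 * L\<^sup>2) * inner (w0 a b c) (w0 a b c) + (- 2 * L) * Phi' a b c + (4 * L * \<theta>) * Rr' a b c)"
  proof -
    have "W a * (norm (- v00 a b c + \<theta> *\<^sub>R v11 a b c - (\<theta> * (b * \<xi>)\<^sup>2) *\<^sub>R v a b c))\<^sup>2
      = inner (A a b c + (2 * L) *\<^sub>R w0 a b c) (A a b c + (2 * L) *\<^sub>R w0 a b c)" for a b c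
      unfolding P[symmetric] We power2_norm_eq_inner[symmetric] by (simp add: power2_eq_square)
    thus ?thesis unfolding I1 by simp
  qed
  have E1: "Jint (\<lambda>a b c. W a * (norm (- v00 a b c + \<theta> *\<^sub>R v11 a b c - (\<theta> * (b * \<xi>)\<^sup>2) *\<^sub>R v a b c))\<^sup>2)
     = JA + 4 * L\<^sup>2 * J0 + 2 * L * Bd"
    unfolding LHSeq JA_def J0_def Bd_def
    by (simp add: Jint_add Jint_diff Jint_cmult NC_intros ncs ncb FPhi FRr)
  have E2: "JAw = bb + J0 - L\<^sup>2 * Jw - \<theta> * J1 - Jq"
    unfolding JAw_def I2 J0_def Jw_def J1_def Jq_def bb_def
    apply (subst Jint_lc6)
    using ncs ncb apply (simp_all add: FS FT)
    done
  have Wn: "W a * (norm z)\<^sup>2 = inner (e a *\<^sub>R z) (e a *\<^sub>R z)" for a and z :: complex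
    by (simp add: We power2_norm_eq_inner)
  have ev0: "e a *\<^sub>R v0 a b c = w0 a b c - L *\<^sub>R w a b c" for a b c
    unfolding w0_def w_def by (simp add: algebra_simps)
  have N1: "- JAw \<le> JA / (2 * L\<^sup>2) + L\<^sup>2 / 2 * Jw"
  proof -
    have "- JAw = Jint (\<lambda>a b c. (- 1) * inner (A a b c) (w a b c))" unfolding JAw_def Jint_cmult by simp
    also have "\<dots> \<le> Jint (\<lambda>a b c. (1 / (2 * L\<^sup>2)) * inner (A a b c) (A a b c) + (L\<^sup>2 / 2) * inner (w a b c) (w a b c))"
    proof (rule Jint_mono)
      show "NC (\<lambda>a b c. (- 1) * inner (A a b c) (w a b c))" by (intro NC_intros ncs)
      show "NC (\<lambda>a b c. (1 / (2 * L\<^sup>2)) * inner (A a b c) (A a b c) + (L\<^sup>2 / 2) * inner (w a b c) (w a b c))"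
        by (intro NC_intros ncs)
      fix a b c
      have "inner (- A a b c) (w a b c) \<le> inner (- A a b c) (- A a b c) / (2 * L\<^sup>2) + L\<^sup>2 / 2 * inner (w a b c) (w a b c)"
        by (rule amgm_inner) (use L in simp)
      thus "(- 1) * inner (A a b c) (w a b c) \<le> (1 / (2 * L\<^sup>2)) * inner (A a b c) (A a b c) + (L\<^sup>2 / 2) * inner (w a b c) (w a b c)"
        by simp
    qed
    also have "\<dots> = JA / (2 * L\<^sup>2) + L\<^sup>2 / 2 * Jw"
      unfolding JA_def Jw_def by (subst Jint_add) (intro NC_intros ncs, intro NC_intros ncs, simp only: Jint_cmult, simp)
    finally show ?thesis .
  qed
  have Phi_ge: "inner (w0 a b c) (w0 a b c) + L\<^sup>2 * inner (w a b c) (w a b c) \<le> Phi a b c"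
       "\<theta> * inner (w1 a b c) (w1 a b c) \<ge> 0" "(\<theta> * (b * \<xi>)\<^sup>2) * inner (w a b c) (w a b c) \<ge> 0" for a b c
    unfolding Phi_def using th by auto
  have N2: "bb \<le> Bd / (2 * L)"
  proof -
    have "bb \<le> Bint ((\<lambda>a b c. (1 / (2 * L)) * Phi a b c) 0)"
      unfolding bb_def
    proof (rule Bint_mono)
      show "NC S" by (rule ncr)
      show "NC (\<lambda>a b c. (1 / (2 * L)) * Phi a b c)" by (intro NC_intros ncs)
      fix b c
      have "S 0 b c \<le> inner (w0 0 b c) (w0 0 b c) / (2 * L) + L / 2 * inner (w 0 b c) (w 0 b c)"
        unfolding S_def by (rule amgm_inner[OF L])
      also have "\<dots> = (inner (w0 0 b c) (w0 0 b c) + L\<^sup>2 * inner (w 0 b c) (w 0 b c)) / (2 * L)"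
        using L by (simp add: field_simps power2_eq_square)
      also have "\<dots> \<le> Phi 0 b c / (2 * L)" using Phi_ge(1)[of 0 b c] L by (simp add: divide_right_mono)
      finally show "S 0 b c \<le> (\<lambda>a b c. (1 / (2 * L)) * Phi a b c) 0 b c" by simp
    qed
    thus ?thesis unfolding Bint_cmult Bd_def by (simp add: Bint_cmult)
  qed
  have nn: "JA \<ge> 0" "J0 \<ge> 0" "Jw \<ge> 0" "J1 \<ge> 0" "Jq \<ge> 0" "Bd \<ge> 0"
    unfolding JA_def J0_def Jw_def J1_def Jq_def Bd_def
    using Phi_ge th by (auto intro!: Jint_nonneg Bint_nonneg order.trans[OF _ Phi_ge(1)])
  define F where "F = (\<lambda>a b c. 1 * inner (w0 a b c - L *\<^sub>R w a b c) (w0 a b c - L *\<^sub>R w a b c)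
     + 1 * inner (w1 a b c) (w1 a b c) + (1 / \<theta>) * ((\<theta> * (b * \<xi>)\<^sup>2) * inner (w a b c) (w a b c)))"
  have ncF: "NC F" unfolding F_def by (intro NC_intros ncs)
  have WF: "W a * ((norm (v0 a b c))\<^sup>2 + (norm (v1 a b c))\<^sup>2 + (b * \<xi>)\<^sup>2 * (norm (v a b c))\<^sup>2) = F a b c" for a b c
  proof -
    have "W a * ((norm (v0 a b c))\<^sup>2 + (norm (v1 a b c))\<^sup>2 + (b * \<xi>)\<^sup>2 * (norm (v a b c))\<^sup>2)
       = W a * (norm (v0 a b c))\<^sup>2 + W a * (norm (v1 a b c))\<^sup>2 + (b * \<xi>)\<^sup>2 * (W a * (norm (v a b c))\<^sup>2)"
      by (simp add: algebra_simps)
    also have "\<dots> = F a b c"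
      unfolding Wn F_def ev0 using th by (simp add: w1_def w_def)
    finally show ?thesis .
  qed
  have Fle: "F a b c \<le> 2 * inner (w0 a b c) (w0 a b c) + (2 * L\<^sup>2) * inner (w a b c) (w a b c)
     + 1 * inner (w1 a b c) (w1 a b c) + (1 / \<theta>) * ((\<theta> * (b * \<xi>)\<^sup>2) * inner (w a b c) (w a b c))" for a b c
  proof -
    have "inner (w0 a b c - L *\<^sub>R w a b c) (w0 a b c - L *\<^sub>R w a b c) \<le> 2 * inner (w0 a b c) (w0 a b c) + 2 * inner (L *\<^sub>R w a b c) (L *\<^sub>R w a b c)"
      by (rule diff_sq_inner)
    thus ?thesis unfolding F_def by (simp add: power2_eq_square)
  qed
  have X1: "W 0 * Bint (\<lambda>b c. (norm (v0 0 b c))\<^sup>2 + (norm (v1 0 b c))\<^sup>2 + (b * \<xi>)\<^sup>2 * (norm (v 0 b c))\<^sup>2) \<le> (2 + 1 / \<theta>) * Bd"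
  proof -
    have "W 0 * Bint (\<lambda>b c. (norm (v0 0 b c))\<^sup>2 + (norm (v1 0 b c))\<^sup>2 + (b * \<xi>)\<^sup>2 * (norm (v 0 b c))\<^sup>2) = Bint (F 0)"
      unfolding Bint_cmult[symmetric] WF by simp
    also have "\<dots> \<le> Bint ((\<lambda>a b c. (2 + 1 / \<theta>) * Phi a b c) 0)"
    proof (rule Bint_mono[OF ncF])
      show "NC (\<lambda>a b c. (2 + 1 / \<theta>) * Phi a b c)" by (intro NC_intros ncs)
      fix b c
      have p: "0 \<le> inner (w0 0 b c) (w0 0 b c)" "0 \<le> inner (w 0 b c) (w 0 b c)" "0 \<le> inner (w1 0 b c) (w1 0 b c)"
        "0 \<le> \<theta> * (b * \<xi>)\<^sup>2 * inner (w 0 b c) (w 0 b c)" "0 \<le> L\<^sup>2 * inner (w 0 b c) (w 0 b c)"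
        using th by auto
      have i: "0 \<le> 1 / \<theta>" using th by simp
      have "F 0 b c \<le> 2 * inner (w0 0 b c) (w0 0 b c) + (2 * L\<^sup>2) * inner (w 0 b c) (w 0 b c)
     + 1 * inner (w1 0 b c) (w1 0 b c) + (1 / \<theta>) * ((\<theta> * (b * \<xi>)\<^sup>2) * inner (w 0 b c) (w 0 b c))" by (rule Fle)
      also have "\<dots> \<le> (2 + 1 / \<theta>) * Phi 0 b c"
      proof -
        have e1: "(2 + 1 / \<theta>) * Phi 0 b c = 2 * inner (w0 0 b c) (w0 0 b c) + 2 * (L\<^sup>2 * inner (w 0 b c) (w 0 b c))
          + (1 / \<theta>) * inner (w0 0 b c) (w0 0 b c) + (1 / \<theta>) * (L\<^sup>2 * inner (w 0 b c) (w 0 b c))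
          + (2 * \<theta> + 1) * inner (w1 0 b c) (w1 0 b c) + (2 + 1 / \<theta>) * ((\<theta> * (b * \<xi>)\<^sup>2) * inner (w 0 b c) (w 0 b c))"
          unfolding Phi_def using th by (simp add: field_simps)
        have "(1 / \<theta>) * ((\<theta> * (b * \<xi>)\<^sup>2) * inner (w 0 b c) (w 0 b c)) \<le> (2 + 1 / \<theta>) * ((\<theta> * (b * \<xi>)\<^sup>2) * inner (w 0 b c) (w 0 b c))"
          using p(4) by (intro mult_right_mono) auto
        moreover have "1 * inner (w1 0 b c) (w1 0 b c) \<le> (2 * \<theta> + 1) * inner (w1 0 b c) (w1 0 b c)"
          using p(3) th by (intro mult_right_mono) auto
        moreover have "0 \<le> (1 / \<theta>) * inner (w0 0 b c) (w0 0 b c)" "0 \<le> (1 / \<theta>) * (L\<^sup>2 * inner (w 0 b c) (w 0 b c))"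
          using p i by auto
        ultimately show ?thesis unfolding e1 by (simp add: algebra_simps)
      qed
      finally show "F 0 b c \<le> (\<lambda>a b c. (2 + 1 / \<theta>) * Phi a b c) 0 b c" by simp
    qed
    also have "\<dots> = (2 + 1 / \<theta>) * Bd" unfolding Bd_def by (simp add: Bint_cmult)
    finally show ?thesis .
  qed
  have X0: "W 0 * Bint (\<lambda>b c. 3 * (norm (v 0 b c))\<^sup>2) \<le> 3 * Bd / L\<^sup>2"
  proof -
    have "W 0 * Bint (\<lambda>b c. 3 * (norm (v 0 b c))\<^sup>2) = Bint ((\<lambda>a b c. 3 * inner (w a b c) (w a b c)) 0)"
      unfolding Bint_cmult[symmetric] by (simp add: algebra_simps We power2_norm_eq_inner w_def)
    also have "\<dots> \<le> Bint ((\<lambda>a b c. (3 / L\<^sup>2) * Phi a b c) 0)"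
    proof (rule Bint_mono)
      show "NC (\<lambda>a b c. 3 * inner (w a b c) (w a b c))" by (intro NC_intros ncs)
      show "NC (\<lambda>a b c. (3 / L\<^sup>2) * Phi a b c)" by (intro NC_intros ncs)
      fix b c
      have "0 \<le> inner (w0 0 b c) (w0 0 b c)" by simp
      hence "L\<^sup>2 * inner (w 0 b c) (w 0 b c) \<le> Phi 0 b c" using Phi_ge(1)[of 0 b c] by linarith
      hence "3 * (L\<^sup>2 * inner (w 0 b c) (w 0 b c)) / L\<^sup>2 \<le> 3 * Phi 0 b c / L\<^sup>2"
        using L by (intro divide_right_mono mult_left_mono) auto
      thus "(\<lambda>a b c. 3 * inner (w a b c) (w a b c)) 0 b c \<le> (\<lambda>a b c. (3 / L\<^sup>2) * Phi a b c) 0 b c"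
        using L by simp
    qed
    also have "\<dots> = 3 * Bd / L\<^sup>2" unfolding Bd_def using Bint_cmult[of "3 / L\<^sup>2" "Phi 0"] by simp
    finally show ?thesis .
  qed
  have T2: "Jint (\<lambda>a b c. W a * ((norm (v0 a b c))\<^sup>2 + (norm (v1 a b c))\<^sup>2 + (b * \<xi>)\<^sup>2 * (norm (v a b c))\<^sup>2))
      \<le> 2 * J0 + 2 * L\<^sup>2 * Jw + J1 + (1 / \<theta>) * Jq"
  proof -
    have "Jint (\<lambda>a b c. W a * ((norm (v0 a b c))\<^sup>2 + (norm (v1 a b c))\<^sup>2 + (b * \<xi>)\<^sup>2 * (norm (v a b c))\<^sup>2)) = Jint F"
      unfolding WF by simp
    also have "\<dots> \<le> Jint (\<lambda>a b c. 2 * inner (w0 a b c) (w0 a b c) + (2 * L\<^sup>2) * inner (w a b c) (w a b c)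
     + 1 * inner (w1 a b c) (w1 a b c) + (1 / \<theta>) * ((\<theta> * (b * \<xi>)\<^sup>2) * inner (w a b c) (w a b c)))"
      by (rule Jint_mono[OF ncF _ Fle]) (intro NC_intros ncs)
    also have "\<dots> = 2 * J0 + 2 * L\<^sup>2 * Jw + J1 + (1 / \<theta>) * Jq"
      unfolding J0_def Jw_def J1_def Jq_def by (subst Jint_lc4) (use ncb in simp_all)
    finally show ?thesis .
  qed
  have T3: "Jint (\<lambda>a b c. W a * (3 * (norm (v a b c))\<^sup>2)) = 3 * Jw"
  proof -
    have "Jint (\<lambda>a b c. W a * (3 * (norm (v a b c))\<^sup>2)) = Jint (\<lambda>a b c. 3 * inner (w a b c) (w a b c))"
      by (simp add: algebra_simps We power2_norm_eq_inner w_def)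
    thus ?thesis unfolding Jw_def Jint_cmult .
  qed
  show ?thesis
    by (rule final_arith[OF L th nn E1 N2 E2 N1 X1 X0 T2 T3])
qed

lemma mixed_sym:
  fixes f fs ft fxy fyx :: "real \<Rightarrow> real \<Rightarrow> complex"
  assumes ds: "\<And>s t. ((\<lambda>s. f s t) has_vector_derivative fs s t) (at s)"
    and dt: "\<And>s t. ((\<lambda>t. f s t) has_vector_derivative ft s t) (at t)"
    and dst: "\<And>s t. ((\<lambda>t. fs s t) has_vector_derivative fxy s t) (at t)"
    and dts: "\<And>s t. ((\<lambda>s. ft s t) has_vector_derivative fyx s t) (at s)"
    and c1: "continuous_on UNIV (\<lambda>z. fyx (fst z) (snd z))"
    and c2: "continuous_on UNIV (\<lambda>z. fxy (fst z) (snd z))"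
    and c3: "continuous_on UNIV (\<lambda>z. ft (fst z) (snd z))"
  shows "fxy s t = fyx s t"
proof -
  define t0 where "t0 = t - 1"
  have cr: "continuous_on UNIV (\<lambda>r. g s' r)" if "continuous_on UNIV (\<lambda>z. g (fst z) (snd z))" for g :: "real \<Rightarrow> real \<Rightarrow> complex" and s'
  proof -
    have "continuous_on UNIV ((\<lambda>z. g (fst z) (snd z)) \<circ> (\<lambda>r. (s', r)))"
      by (rule continuous_on_compose[OF _ continuous_on_subset[OF that]]) (auto intro!: continuous_intros)
    thus ?thesis by (simp add: o_def)
  qed
  have key: "integral {t0..\<tau>} (fyx s) = integral {t0..\<tau>} (fxy s)" if "t0 \<le> \<tau>" for \<tau>
  proof -
    have ftc: "integral {t0..\<tau>} (ft s') = f s' \<tau> - f s' t0" for s'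
      using fundamental_theorem_of_calculus[OF that, of "\<lambda>r. f s' r" "ft s'"] dt
      by (auto intro: has_vector_derivative_at_within integral_unique)
    have L: "((\<lambda>s'. integral (cbox t0 \<tau>) (\<lambda>r. ft s' r)) has_vector_derivative integral (cbox t0 \<tau>) (\<lambda>r. fyx s r)) (at s within UNIV)"
    proof (rule leibniz_rule_vector_derivative)
      show "((\<lambda>x. ft x r) has_vector_derivative fyx x r) (at x within UNIV)" for x r by (simp add: dts)
      show "(\<lambda>r. ft x r) integrable_on cbox t0 \<tau>" for x
        by (rule integrable_continuous) (rule continuous_on_subset[OF cr[OF c3]], simp)
      show "continuous_on (UNIV \<times> cbox t0 \<tau>) (\<lambda>(x, t). fyx x t)"
        using continuous_on_subset[OF c1] by (simp add: split_beta')
    qed auto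
    have L2: "((\<lambda>s'. f s' \<tau> - f s' t0) has_vector_derivative fs s \<tau> - fs s t0) (at s)"
      by (intro has_vector_derivative_diff ds)
    have "integral {t0..\<tau>} (fyx s) = fs s \<tau> - fs s t0"
      using L L2 ftc by (auto intro: vector_derivative_unique_at)
    also have "\<dots> = integral {t0..\<tau>} (fxy s)"
      using fundamental_theorem_of_calculus[OF that, of "\<lambda>r. fs s r" "fxy s"] dst
      by (auto intro: has_vector_derivative_at_within integral_unique[symmetric])
    finally show ?thesis .
  qed
  have int: "t \<in> interior {t0..t+1}" unfolding t0_def by simp
  have "((\<lambda>u. integral {t0..u} (fyx s)) has_vector_derivative fyx s t) (at t within {t0..t+1})"
    by (rule integral_has_vector_derivative) (auto simp: t0_def intro: continuous_on_subset[OF cr[OF c1]])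
  hence A: "((\<lambda>u. integral {t0..u} (fyx s)) has_vector_derivative fyx s t) (at t)"
    using at_within_interior[OF int] by simp
  have "((\<lambda>u. integral {t0..u} (fxy s)) has_vector_derivative fxy s t) (at t within {t0..t+1})"
    by (rule integral_has_vector_derivative) (auto simp: t0_def intro: continuous_on_subset[OF cr[OF c2]])
  hence B: "((\<lambda>u. integral {t0..u} (fxy s)) has_vector_derivative fxy s t) (at t)"
    using at_within_interior[OF int] by simp
  have B': "((\<lambda>u. integral {t0..u} (fyx s)) has_vector_derivative fxy s t) (at t)"
    by (rule has_vector_derivative_transform_within_open[OF B, of "{t0<..}"]) (auto simp: t0_def intro!: key[unfolded t0_def, symmetric])
  show ?thesis using vector_derivative_unique_at[OF A B'] by simp
qed

inductive_cases ip_nilE: "iter_partial f [] g"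
inductive_cases ip_consE: "iter_partial f (v # vs) g"

lemma ip_det: "iter_partial f vs g \<Longrightarrow> iter_partial f vs h \<Longrightarrow> g = h"
proof (induction arbitrary: h rule: iter_partial.induct)
  case (ip_nil f) thus ?case by (rule ip_nilE) simp
next
  case (ip_cons f vs g v g')
  from ip_cons.prems obtain g2 where g2: "iter_partial f vs g2"
    and d2: "\<And>x. ((\<lambda>t. g2 (x + t *\<^sub>R v)) has_vector_derivative h x) (at 0)"
    by (erule ip_consE)
  have "g = g2" using ip_cons.IH[OF g2] .
  show ?case
  proof
    fix x show "g' x = h x" using vector_derivative_unique_at[OF ip_cons.hyps(2)[of x]] d2[of x] \<open>g = g2\<close> by simp
  qed
qed

lemma ip_single: "iter_partial f [v] g \<Longrightarrow> ((\<lambda>t. f (x + t *\<^sub>R v)) has_vector_derivative g x) (at 0)"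
proof -
  assume "iter_partial f [v] g"
  then obtain g0 where a: "iter_partial f [] g0" and b: "\<And>x. ((\<lambda>t. g0 (x + t *\<^sub>R v)) has_vector_derivative g x) (at 0)"
    by (erule ip_consE)
  have "g0 = f" using a by (rule ip_nilE) simp
  thus ?thesis using b by simp
qed

lemma ip_two: "iter_partial f [v2, v1] g \<Longrightarrow> iter_partial f [v1] g1 \<Longrightarrow> ((\<lambda>t. g1 (x + t *\<^sub>R v2)) has_vector_derivative g x) (at 0)"
proof -
  assume a: "iter_partial f [v2, v1] g" and b: "iter_partial f [v1] g1"
  from a obtain g2 where g2: "iter_partial f [v1] g2"
    and d: "\<And>x. ((\<lambda>t. g2 (x + t *\<^sub>R v2)) has_vector_derivative g x) (at 0)"
    by (erule ip_consE)
  have "g2 = g1" by (rule ip_det[OF g2 b])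
  thus ?thesis using d by simp
qed

lemma ip_supp: "iter_partial f vs g \<Longrightarrow> g x \<noteq> 0 \<Longrightarrow> x \<in> closure {x. f x \<noteq> 0}"
proof (induction arbitrary: x rule: iter_partial.induct)
  case (ip_nil f) thus ?case using closure_subset[of "{x. f x \<noteq> 0}"] by auto
next
  case (ip_cons f vs g v g')
  show ?case
  proof (rule ccontr)
    assume nx: "x \<notin> closure {x. f x \<noteq> 0}"
    define U where "U = {t::real. x + t *\<^sub>R v \<in> - closure {x. f x \<noteq> 0}}"
    have "open ((\<lambda>t. x + t *\<^sub>R v) -` (- closure {x. f x \<noteq> 0}))"
      by (rule open_vimage) (simp_all add: continuous_intros)
    hence oU: "open U" by (simp add: U_def vimage_def)
    have "0 \<in> U" using nx by (simp add: U_def)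
    have "((\<lambda>t. (0::'b)) has_vector_derivative 0) (at 0)" by simp
    hence "((\<lambda>t. g (x + t *\<^sub>R v)) has_vector_derivative 0) (at 0)"
    proof (rule has_vector_derivative_transform_within_open[OF _ oU \<open>0 \<in> U\<close>])
      fix y assume "y \<in> U"
      hence "x + y *\<^sub>R v \<notin> closure {x. f x \<noteq> 0}" by (simp add: U_def)
      thus "0 = g (x + y *\<^sub>R v)" using ip_cons.IH[of "x + y *\<^sub>R v"] by metis
    qed
    hence "g' x = 0" using vector_derivative_unique_at[OF ip_cons.hyps(2)[of x]] by simp
    thus False using ip_cons.prems by simp
  qed
qed

lemma shift_deriv:
  assumes "((\<lambda>h. g (a + h)) has_vector_derivative D) (at 0)"
  shows "(g has_vector_derivative D) (at a)"
proof -
  have f: "((\<lambda>t. t - a) has_vector_derivative 1) (at a)"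
    using has_vector_derivative_diff[OF has_vector_derivative_id has_vector_derivative_const[of a]] by simp
  have "(((\<lambda>h. g (a + h)) \<circ> (\<lambda>t. t - a)) has_vector_derivative (1 *\<^sub>R D)) (at a)"
    by (rule vector_diff_chain_at[OF f]) (simp add: assms)
  thus ?thesis by (simp add: o_def)
qed

lemma dir0:
  fixes g :: "real \<times> real \<times> 'a::euclidean_space \<times> real \<Rightarrow> complex"
  assumes "((\<lambda>t. g ((a, b, c, d) + t *\<^sub>R (1, 0))) has_vector_derivative D) (at 0)"
  shows "((\<lambda>t. g (t, b, c, d)) has_vector_derivative D) (at a)"
  by (rule shift_deriv) (use assms in simp)

lemma dir1:
  fixes g :: "real \<times> real \<times> 'a::euclidean_space \<times> real \<Rightarrow> complex"
  assumes "((\<lambda>t. g ((a, b, c, d) + t *\<^sub>R (0, 1, 0))) has_vector_derivative D) (at 0)"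
  shows "((\<lambda>t. g (a, t, c, d)) has_vector_derivative D) (at b)"
  by (rule shift_deriv) (use assms in simp)

lemma cont_slice2:
  fixes g :: "real \<times> real \<times> 'a::euclidean_space \<times> real \<Rightarrow> complex"
  assumes "continuous_on UNIV g"
  shows "continuous_on UNIV (\<lambda>z. g (fst z, snd z, c, d))"
proof -
  have "continuous_on UNIV (g \<circ> (\<lambda>z. (fst z, snd z, c, d)))"
    by (rule continuous_on_compose[OF _ continuous_on_subset[OF assms]]) (auto intro!: continuous_intros)
  thus ?thesis by (simp add: o_def)
qed

lemma C0_partials:
  fixes u :: "real \<times> real \<times> 'a::euclidean_space \<times> real \<Rightarrow> complex"
  assumes "C0_inf u"
  obtains U0 U00 U1 U11 U01 R where
    "continuous_on UNIV u" "continuous_on UNIV U0" "continuous_on UNIV U00" "continuous_on UNIV U1"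
    "continuous_on UNIV U11" "continuous_on UNIV U01"
    "\<And>z. u z \<noteq> 0 \<Longrightarrow> norm z \<le> R" "\<And>z. U0 z \<noteq> 0 \<Longrightarrow> norm z \<le> R" "\<And>z. U00 z \<noteq> 0 \<Longrightarrow> norm z \<le> R"
    "\<And>z. U1 z \<noteq> 0 \<Longrightarrow> norm z \<le> R" "\<And>z. U11 z \<noteq> 0 \<Longrightarrow> norm z \<le> R" "\<And>z. U01 z \<noteq> 0 \<Longrightarrow> norm z \<le> R"
    "\<And>a b c d. ((\<lambda>t. u (t, b, c, d)) has_vector_derivative U0 (a, b, c, d)) (at a)"
    "\<And>a b c d. ((\<lambda>t. U0 (t, b, c, d)) has_vector_derivative U00 (a, b, c, d)) (at a)"
    "\<And>a b c d. ((\<lambda>t. u (a, t, c, d)) has_vector_derivative U1 (a, b, c, d)) (at b)"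
    "\<And>a b c d. ((\<lambda>t. U1 (a, t, c, d)) has_vector_derivative U11 (a, b, c, d)) (at b)"
    "\<And>a b c d. ((\<lambda>t. U1 (t, b, c, d)) has_vector_derivative U01 (a, b, c, d)) (at a)"
    "\<And>a b c d. ((\<lambda>t. U0 (a, t, c, d)) has_vector_derivative U01 (a, b, c, d)) (at b)"
proof -
  define e0 :: "real \<times> real \<times> 'a \<times> real" where "e0 = (1, 0)"
  define e1 :: "real \<times> real \<times> 'a \<times> real" where "e1 = (0, 1, 0)"
  have B: "e0 \<in> Basis" "e1 \<in> Basis" unfolding e0_def e1_def by (auto simp: Basis_prod_def)
  have sm: "\<And>vs. set vs \<subseteq> Basis \<Longrightarrow> \<exists>g. iter_partial u vs g \<and> continuous_on UNIV g"
    using assms by (auto simp: C0_inf_def smooth_fun_def)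
  have cpt: "compact (closure {x. u x \<noteq> 0})" using assms by (simp add: C0_inf_def)
  then obtain R where R: "\<And>z. z \<in> closure {x. u x \<noteq> 0} \<Longrightarrow> norm z \<le> R"
    using compact_imp_bounded bounded_iff by metis
  obtain g where g: "iter_partial u [] g" "continuous_on UNIV g" using sm[of "[]"] by auto
  have cu: "continuous_on UNIV u" using g by (auto elim: ip_nilE)
  obtain U0 where U0: "iter_partial u [e0] U0" "continuous_on UNIV U0" using sm[of "[e0]"] B by auto
  obtain U00 where U00: "iter_partial u [e0, e0] U00" "continuous_on UNIV U00" using sm[of "[e0, e0]"] B by auto
  obtain U1 where U1: "iter_partial u [e1] U1" "continuous_on UNIV U1" using sm[of "[e1]"] B by auto
  obtain U11 where U11: "iter_partial u [e1, e1] U11" "continuous_on UNIV U11" using sm[of "[e1, e1]"] B by auto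
  obtain U10 where U10: "iter_partial u [e0, e1] U10" "continuous_on UNIV U10" using sm[of "[e0, e1]"] B by auto
  obtain U01 where U01: "iter_partial u [e1, e0] U01" "continuous_on UNIV U01" using sm[of "[e1, e0]"] B by auto
  have S: "\<And>g vs z. iter_partial u vs g \<Longrightarrow> g z \<noteq> 0 \<Longrightarrow> norm z \<le> R" using R ip_supp by blast
  have d0: "((\<lambda>t. u (t, b, c, d)) has_vector_derivative U0 (a, b, c, d)) (at a)" for a b c d
    by (rule dir0[OF ip_single[OF U0(1), of "(a, b, c, d)", unfolded e0_def]])
  have d00: "((\<lambda>t. U0 (t, b, c, d)) has_vector_derivative U00 (a, b, c, d)) (at a)" for a b c d
    by (rule dir0[OF ip_two[OF U00(1) U0(1), of "(a, b, c, d)", unfolded e0_def]])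
  have d1: "((\<lambda>t. u (a, t, c, d)) has_vector_derivative U1 (a, b, c, d)) (at b)" for a b c d
    by (rule dir1[OF ip_single[OF U1(1), of "(a, b, c, d)", unfolded e1_def]])
  have d11: "((\<lambda>t. U1 (a, t, c, d)) has_vector_derivative U11 (a, b, c, d)) (at b)" for a b c d
    by (rule dir1[OF ip_two[OF U11(1) U1(1), of "(a, b, c, d)", unfolded e1_def]])
  have d10: "((\<lambda>t. U1 (t, b, c, d)) has_vector_derivative U10 (a, b, c, d)) (at a)" for a b c d
    by (rule dir0[OF ip_two[OF U10(1) U1(1), of "(a, b, c, d)", unfolded e0_def]])
  have d01: "((\<lambda>t. U0 (a, t, c, d)) has_vector_derivative U01 (a, b, c, d)) (at b)" for a b c d
    by (rule dir1[OF ip_two[OF U01(1) U0(1), of "(a, b, c, d)", unfolded e1_def]])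
  have sym: "U01 (a, b, c, d) = U10 (a, b, c, d)" for a b c d
    apply (rule mixed_sym[of "\<lambda>s t. u (s, t, c, d)" "\<lambda>s t. U0 (s, t, c, d)" "\<lambda>s t. U1 (s, t, c, d)"
        "\<lambda>s t. U01 (s, t, c, d)" "\<lambda>s t. U10 (s, t, c, d)" a b])
    apply (rule d0)
    apply (rule d1)
    apply (rule d01)
    apply (rule d10)
    apply (rule cont_slice2[OF U10(2)])
    apply (rule cont_slice2[OF U01(2)])
    apply (rule cont_slice2[OF U1(2)])
    done
  have d10': "((\<lambda>t. U1 (t, b, c, d)) has_vector_derivative U01 (a, b, c, d)) (at a)" for a b c d
    using d10 sym by simp
  show ?thesis
    by (rule that[of U0 U00 U1 U11 U01 R]) (use cu U0 U00 U1 U11 U01 d0 d00 d1 d11 d10' d01 in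
      \<open>auto intro: R S[OF U0(1)] S[OF U00(1)] S[OF U1(1)] S[OF U11(1)] S[OF U01(1)] closure_subset[THEN subsetD]\<close>)
qed

lemma norm3_le4: "norm (a, b, c) \<le> norm (a, b, c, d)"
  for a b :: real and c :: "'a::real_normed_vector" and d :: real
proof -
  have "norm c \<le> norm (c, d)" by (rule norm_fst_le)
  hence "(norm c)\<^sup>2 \<le> (norm (c, d))\<^sup>2" by (simp add: power_mono)
  thus ?thesis by (simp add: norm_Pair)
qed

lemma abs4_le: "\<bar>d\<bar> \<le> norm (a, b, c, d)"
  for a b :: real and c :: "'a::real_normed_vector" and d :: real
proof -
  have "norm d \<le> norm (c, d)" by (rule norm_snd_le)
  also have "\<dots> \<le> norm (b, c, d)" by (rule norm_snd_le)
  also have "\<dots> \<le> norm (a, b, c, d)" by (rule norm_snd_le)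
  finally show ?thesis by simp
qed

lemma uhat_eq:
  fixes g :: "real \<times> real \<times> 'a::euclidean_space \<times> real \<Rightarrow> complex"
  assumes c: "continuous_on UNIV g" and s: "\<And>z. g z \<noteq> 0 \<Longrightarrow> norm z \<le> R"
  shows "uhat g a b c \<xi> = integral (cbox (-R) R) (\<lambda>xn. exp (- \<i> * complex_of_real (xn * \<xi>)) * g (a, b, c, xn))"
proof -
  let ?k = "\<lambda>xn. exp (- \<i> * complex_of_real (xn * \<xi>)) * g (a, b, c, xn)"
  have ck: "continuous_on UNIV ?k"
  proof -
    have "continuous_on UNIV (g \<circ> (\<lambda>xn. (a, b, c, xn)))"
      by (rule continuous_on_compose[OF _ continuous_on_subset[OF c]]) (auto intro!: continuous_intros)
    thus ?thesis by (auto simp: o_def intro!: continuous_intros)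
  qed
  have sk: "?k xn \<noteq> 0 \<Longrightarrow> norm xn \<le> R" for xn
    using s[of "(a, b, c, xn)"] abs4_le[of xn a b c] by auto
  have ik: "integrable lborel ?k" by (rule integrable_cont_bdd[OF ck sk])
  have "(?k has_integral (LINT xn|lborel. ?k xn)) UNIV" by (rule has_integral_integral_lborel[OF ik])
  moreover have "(\<lambda>x. if x \<in> cbox (-R) R then ?k x else 0) = ?k"
    using sk by (force simp: fun_eq_iff)
  ultimately have "(?k has_integral (LINT xn|lborel. ?k xn)) (cbox (-R) R)"
    using has_integral_restrict_UNIV[of "cbox (-R) R" ?k] by simp
  thus ?thesis by (simp add: uhat_def integral_unique)
qed

lemma uhat_NC:
  fixes g :: "real \<times> real \<times> 'a::euclidean_space \<times> real \<Rightarrow> complex"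
  assumes c: "continuous_on UNIV g" and s: "\<And>z. g z \<noteq> 0 \<Longrightarrow> norm z \<le> R"
  shows "NC (\<lambda>a b c. uhat g a b c \<xi>)"
  unfolding NC_def
proof
  let ?f = "\<lambda>z (t::real). exp (- \<i> * complex_of_real (t * \<xi>)) * g (fst z, fst (snd z), snd (snd z), t)"
  have "continuous_on (UNIV \<times> cbox (-R) R) (\<lambda>(z, t). ?f z t)"
  proof -
    have "continuous_on UNIV (g \<circ> (\<lambda>(z::real \<times> real \<times> 'a, t::real). (fst z, fst (snd z), snd (snd z), t)))"
      by (rule continuous_on_compose[OF _ continuous_on_subset[OF c]]) (auto simp: split_beta intro!: continuous_intros)
    hence "continuous_on UNIV (\<lambda>(z, t). ?f z t)"
      by (auto simp: o_def split_beta intro!: continuous_intros)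
    thus ?thesis by (rule continuous_on_subset) simp
  qed
  hence "continuous_on UNIV (\<lambda>z. integral (cbox (-R) R) (?f z))"
    by (rule integral_continuous_on_param)
  thus "continuous_on UNIV (\<lambda>z. uhat g (fst z) (fst (snd z)) (snd (snd z)) \<xi>)"
    by (simp add: uhat_eq[OF c s])
  show "\<exists>R. \<forall>a b c. uhat g a b c \<xi> \<noteq> 0 \<longrightarrow> norm (a, b, c) \<le> R"
  proof (intro exI allI impI)
    fix a b c assume ne: "uhat g a b c \<xi> \<noteq> 0"
    have "\<exists>xn. g (a, b, c, xn) \<noteq> 0"
    proof (rule ccontr)
      assume "\<not> ?thesis"
      hence "uhat g a b c \<xi> = 0" by (simp add: uhat_def)
      thus False using ne by simp
    qed
    then obtain xn where "g (a, b, c, xn) \<noteq> 0" by blast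
    thus "norm (a, b, c) \<le> R" using s norm3_le4[of a b c xn] by force
  qed
qed

lemma uhat_deriv_gen:
  fixes g g0 :: "real \<times> real \<times> 'a::euclidean_space \<times> real \<Rightarrow> complex"
    and p :: "real \<Rightarrow> real \<times> real \<times> 'a"
  assumes c: "continuous_on UNIV g" and s: "\<And>z. g z \<noteq> 0 \<Longrightarrow> norm z \<le> R"
    and c0: "continuous_on UNIV g0" and s0: "\<And>z. g0 z \<noteq> 0 \<Longrightarrow> norm z \<le> R"
    and cp: "continuous_on UNIV p"
    and d: "\<And>x xn. ((\<lambda>t. g (fst (p t), fst (snd (p t)), snd (snd (p t)), xn)) has_vector_derivative
              g0 (fst (p x), fst (snd (p x)), snd (snd (p x)), xn)) (at x)"
  shows "((\<lambda>t. uhat g (fst (p t)) (fst (snd (p t))) (snd (snd (p t))) \<xi>) has_vector_derivative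
           uhat g0 (fst (p x)) (fst (snd (p x))) (snd (snd (p x))) \<xi>) (at x)"
proof -
  define E where "E = (\<lambda>t::real. exp (- \<i> * complex_of_real (t * \<xi>)))"
  define F where "F = (\<lambda>x t. E t * g (fst (p x), fst (snd (p x)), snd (snd (p x)), t))"
  define F0 where "F0 = (\<lambda>x t. E t * g0 (fst (p x), fst (snd (p x)), snd (snd (p x)), t))"
  have cf0: "continuous_on UNIV (\<lambda>(x, t). F0 x t)"
  proof -
    have "continuous_on UNIV (g0 \<circ> (\<lambda>(x, t). (fst (p x), fst (snd (p x)), snd (snd (p x)), t)))"
      by (rule continuous_on_compose[OF _ continuous_on_subset[OF c0]])
         (auto simp: split_beta intro!: continuous_intros continuous_on_compose2[OF cp])
    thus ?thesis unfolding E_def F0_def by (auto simp: o_def split_beta intro!: continuous_intros)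
  qed
  have cf: "continuous_on UNIV (F x)" for x
  proof -
    have "continuous_on UNIV (g \<circ> (\<lambda>t. (fst (p x), fst (snd (p x)), snd (snd (p x)), t)))"
      by (rule continuous_on_compose[OF _ continuous_on_subset[OF c]]) (auto intro!: continuous_intros)
    thus ?thesis unfolding E_def F_def by (auto simp: o_def intro!: continuous_intros)
  qed
  have L: "((\<lambda>x. integral (cbox (-R) R) (F x)) has_vector_derivative integral (cbox (-R) R) (F0 x)) (at x within UNIV)"
  proof (rule leibniz_rule_vector_derivative)
    show "((\<lambda>x. F x t) has_vector_derivative F0 x t) (at x within UNIV)" for x t
      unfolding F_def F0_def by (simp add: has_vector_derivative_mult_right d)
    show "F x integrable_on cbox (-R) R" for x
      by (rule integrable_continuous) (rule continuous_on_subset[OF cf], simp)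
    show "continuous_on (UNIV \<times> cbox (-R) R) (\<lambda>(x, t). F0 x t)"
      by (rule continuous_on_subset[OF cf0]) simp
  qed auto
  thus ?thesis unfolding E_def F_def F0_def by (simp add: uhat_eq[OF c s] uhat_eq[OF c0 s0])
qed

lemma uhat_deriv0:
  fixes g g0 :: "real \<times> real \<times> 'a::euclidean_space \<times> real \<Rightarrow> complex"
  assumes c: "continuous_on UNIV g" and s: "\<And>z. g z \<noteq> 0 \<Longrightarrow> norm z \<le> R"
    and c0: "continuous_on UNIV g0" and s0: "\<And>z. g0 z \<noteq> 0 \<Longrightarrow> norm z \<le> R"
    and d: "\<And>a b c d. ((\<lambda>t. g (t, b, c, d)) has_vector_derivative g0 (a, b, c, d)) (at a)"
  shows "((\<lambda>t. uhat g t b c \<xi>) has_vector_derivative uhat g0 a b c \<xi>) (at a)"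
  using uhat_deriv_gen[OF c s c0 s0, where p="\<lambda>t. (t, b, c)" and x=a and \<xi>=\<xi>] d by (simp add: continuous_intros)

lemma uhat_deriv1:
  fixes g g0 :: "real \<times> real \<times> 'a::euclidean_space \<times> real \<Rightarrow> complex"
  assumes c: "continuous_on UNIV g" and s: "\<And>z. g z \<noteq> 0 \<Longrightarrow> norm z \<le> R"
    and c0: "continuous_on UNIV g0" and s0: "\<And>z. g0 z \<noteq> 0 \<Longrightarrow> norm z \<le> R"
    and d: "\<And>a b c d. ((\<lambda>t. g (a, t, c, d)) has_vector_derivative g0 (a, b, c, d)) (at b)"
  shows "((\<lambda>t. uhat g a t c \<xi>) has_vector_derivative uhat g0 a b c \<xi>) (at b)"
  using uhat_deriv_gen[OF c s c0 s0, where p="\<lambda>t. (a, t, c)" and x=b and \<xi>=\<xi>] d by (simp add: continuous_intros)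

lemma NC_norm2:
  fixes f :: "real \<Rightarrow> real \<Rightarrow> 'a::euclidean_space \<Rightarrow> 'b::real_inner"
  shows "NC f \<Longrightarrow> NC (\<lambda>a b c. (norm (f a b c))\<^sup>2)"
  using NC_inner[of f f] by (simp add: power2_norm_eq_inner)

lemma NC_q1: "NC f \<Longrightarrow> NC (\<lambda>a b c. (b * \<xi>)\<^sup>2 * (f a b c :: real))"
  using NC_qr[of f 1 \<xi>] by simp

lemma main_v:
  fixes v v0 v00 v1 v11 v01 :: "real \<Rightarrow> real \<Rightarrow> 'a::euclidean_space \<Rightarrow> complex"
    and al :: real
  assumes nc: "NC v" "NC v0" "NC v00" "NC v1" "NC v11" "NC v01"
    and d0: "\<And>a b c. ((\<lambda>t. v t b c) has_vector_derivative v0 a b c) (at a)"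
    and d00: "\<And>a b c. ((\<lambda>t. v0 t b c) has_vector_derivative v00 a b c) (at a)"
    and d1: "\<And>a b c. ((\<lambda>t. v a t c) has_vector_derivative v1 a b c) (at b)"
    and d11: "\<And>a b c. ((\<lambda>t. v1 a t c) has_vector_derivative v11 a b c) (at b)"
    and d01a: "\<And>a b c. ((\<lambda>t. v1 t b c) has_vector_derivative v01 a b c) (at a)"
    and d01b: "\<And>a b c. ((\<lambda>t. v0 a t c) has_vector_derivative v01 a b c) (at b)"
    and th: "\<theta> > 0" and tau: "\<tau> > 0" and lam: "lm > 0"
  defines "W \<equiv> \<lambda>x0. exp (2 * \<tau> * lm * (x0 - al))"
  shows "(LINT x0:{0<..}|lborel. W x0 * nsq (Mop \<theta> \<xi> v x0))
        \<ge> (1 / (8 + 2 / \<theta>)) * W 0 * (\<tau> * lm * E1 \<xi> v 0 + \<tau> ^ 3 * lm ^ 3 * E0 \<xi> v 0)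
          + (1 / (8 + 2 / \<theta>)) * \<tau>\<^sup>2 * (LINT x0:{0<..}|lborel. W x0 * lm\<^sup>2 * E1 \<xi> v x0)
          + (1 / (8 + 2 / \<theta>)) * \<tau> ^ 4 * (LINT x0:{0<..}|lborel. W x0 * lm ^ 4 * E0 \<xi> v x0)"
proof -
  define L where "L = \<tau> * lm"
  have L: "L > 0" using tau lam by (simp add: L_def)
  have WL: "W = (\<lambda>x0. exp (2 * L * (x0 - al)))" unfolding W_def L_def by (simp add: mult.assoc)
  note core_i = core[OF nc d0 d00 d1 d11 d01a d01b th L, of al \<xi>]
  have D0v: "D0 v = (\<lambda>a b c. - \<i> * v0 a b c)"
    by (intro ext) (simp add: D0_def vector_derivative_at[OF d0])
  have D1v: "D1 v = (\<lambda>a b c. - \<i> * v1 a b c)"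
    by (intro ext) (simp add: D1_def vector_derivative_at[OF d1])
  have D00v: "D0 (D0 v) = (\<lambda>a b c. - v00 a b c)"
  proof (intro ext)
    fix a b c
    have "vector_derivative (\<lambda>t. - \<i> * v0 t b c) (at a) = - \<i> * v00 a b c"
      by (rule vector_derivative_at[OF has_vector_derivative_mult_right[OF d00]])
    thus "D0 (D0 v) a b c = - v00 a b c" unfolding D0v D0_def by simp
  qed
  have D11v: "D1 (D1 v) = (\<lambda>a b c. - v11 a b c)"
  proof (intro ext)
    fix a b c
    have "vector_derivative (\<lambda>t. - \<i> * v1 a t c) (at b) = - \<i> * v11 a b c"
      by (rule vector_derivative_at[OF has_vector_derivative_mult_right[OF d11]])
    thus "D1 (D1 v) a b c = - v11 a b c" unfolding D1v D1_def by simp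
  qed
  have Mv: "Mop \<theta> \<xi> v a b c = - v00 a b c + \<theta> *\<^sub>R v11 a b c - (\<theta> * (b * \<xi>)\<^sup>2) *\<^sub>R v a b c" for a b c
    unfolding Mop_def D00v D11v by (simp add: scaleR_conv_of_real algebra_simps)
  have ncn: "NC (\<lambda>a b c. (norm (v0 a b c))\<^sup>2)" "NC (\<lambda>a b c. (norm (v1 a b c))\<^sup>2)"
    "NC (\<lambda>a b c. (b * \<xi>)\<^sup>2 * (norm (v a b c))\<^sup>2)"
    by (intro NC_norm2 NC_q1 nc)+
  have E1eq: "E1 \<xi> v x = Bint (\<lambda>b c. (norm (v0 x b c))\<^sup>2 + (norm (v1 x b c))\<^sup>2 + (b * \<xi>)\<^sup>2 * (norm (v x b c))\<^sup>2)" for x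
  proof -
    have "E1 \<xi> v x = Bint (\<lambda>b c. (norm (v0 x b c))\<^sup>2) + Bint (\<lambda>b c. (norm (v1 x b c))\<^sup>2)
         + Bint (\<lambda>b c. (b * \<xi>)\<^sup>2 * (norm (v x b c))\<^sup>2)"
      unfolding E1_def D0v D1v nsq_def Bint_def by (simp add: norm_mult power_mult_distrib)
    also have "\<dots> = Bint (\<lambda>b c. (norm (v0 x b c))\<^sup>2 + (norm (v1 x b c))\<^sup>2 + (b * \<xi>)\<^sup>2 * (norm (v x b c))\<^sup>2)"
      using Bint_add[OF NC_add[OF ncn(1) ncn(2)] ncn(3), of x] Bint_add[OF ncn(1) ncn(2), of x] by simp
    finally show ?thesis .
  qed
  have E0eq: "E0 \<xi> v x = Bint (\<lambda>b c. 3 * (norm (v x b c))\<^sup>2)" for x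
    unfolding E0_def nsq_def Bint_def by simp
  have lhs: "(LINT x0:{0<..}|lborel. W x0 * nsq (Mop \<theta> \<xi> v x0))
     = Jint (\<lambda>a b c. W a * (norm (- v00 a b c + \<theta> *\<^sub>R v11 a b c - (\<theta> * (b * \<xi>)\<^sup>2) *\<^sub>R v a b c))\<^sup>2)"
    unfolding Jint_def nsq_def Mv by simp
  have t2: "(LINT x0:{0<..}|lborel. W x0 * lm\<^sup>2 * E1 \<xi> v x0)
     = lm\<^sup>2 * Jint (\<lambda>a b c. W a * ((norm (v0 a b c))\<^sup>2 + (norm (v1 a b c))\<^sup>2 + (b * \<xi>)\<^sup>2 * (norm (v a b c))\<^sup>2))"
  proof -
    have "(\<lambda>x0. W x0 * lm\<^sup>2 * E1 \<xi> v x0) = (\<lambda>x0. lm\<^sup>2 * (LINT p|lborel. W x0 * ((norm (v0 x0 (fst p) (snd p)))\<^sup>2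
       + (norm (v1 x0 (fst p) (snd p)))\<^sup>2 + (fst p * \<xi>)\<^sup>2 * (norm (v x0 (fst p) (snd p)))\<^sup>2)))"
      by (rule ext) (simp add: E1eq Bint_def mult_ac)
    thus ?thesis unfolding Jint_def by simp
  qed
  have t3: "(LINT x0:{0<..}|lborel. W x0 * lm ^ 4 * E0 \<xi> v x0)
     = lm ^ 4 * Jint (\<lambda>a b c. W a * (3 * (norm (v a b c))\<^sup>2))"
  proof -
    have "(\<lambda>x0. W x0 * lm ^ 4 * E0 \<xi> v x0) = (\<lambda>x0. lm ^ 4 * (LINT p|lborel. W x0 * (3 * (norm (v x0 (fst p) (snd p)))\<^sup>2)))"
      by (rule ext) (simp add: E0eq Bint_def mult_ac)
    thus ?thesis unfolding Jint_def by simp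
  qed
  define C where "C = 1 / (8 + 2 / \<theta>)"
  define B1 where "B1 = Bint (\<lambda>b c. (norm (v0 0 b c))\<^sup>2 + (norm (v1 0 b c))\<^sup>2 + (b * \<xi>)\<^sup>2 * (norm (v 0 b c))\<^sup>2)"
  define B0 where "B0 = Bint (\<lambda>b c. 3 * (norm (v 0 b c))\<^sup>2)"
  define J2 where "J2 = Jint (\<lambda>a b c. W a * ((norm (v0 a b c))\<^sup>2 + (norm (v1 a b c))\<^sup>2 + (b * \<xi>)\<^sup>2 * (norm (v a b c))\<^sup>2))"
  define J3 where "J3 = Jint (\<lambda>a b c. W a * (3 * (norm (v a b c))\<^sup>2))"
  define JL where "JL = Jint (\<lambda>a b c. W a * (norm (- v00 a b c + \<theta> *\<^sub>R v11 a b c - (\<theta> * (b * \<xi>)\<^sup>2) *\<^sub>R v a b c))\<^sup>2)"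
  have c2: "JL \<ge> C * W 0 * (L * B1 + L ^ 3 * B0) + C * L\<^sup>2 * J2 + C * L ^ 4 * J3"
    using core_i unfolding C_def B1_def B0_def J2_def J3_def JL_def WL by simp
  have eq: "C * W 0 * (\<tau> * lm * E1 \<xi> v 0 + \<tau> ^ 3 * lm ^ 3 * E0 \<xi> v 0)
          + C * \<tau>\<^sup>2 * (LINT x0:{0<..}|lborel. W x0 * lm\<^sup>2 * E1 \<xi> v x0)
          + C * \<tau> ^ 4 * (LINT x0:{0<..}|lborel. W x0 * lm ^ 4 * E0 \<xi> v x0)
     = C * W 0 * (L * B1 + L ^ 3 * B0) + C * L\<^sup>2 * J2 + C * L ^ 4 * J3"
    unfolding t2 t3 E1eq[of 0] E0eq[of 0] B1_def[symmetric] B0_def[symmetric] J2_def[symmetric] J3_def[symmetric] L_def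
    by (simp add: power_mult_distrib)
  show ?thesis using c2 unfolding lhs JL_def[symmetric] eq[unfolded C_def] C_def .
qed

theorem lemma2p1:
  fixes \<theta> a :: real
  assumes "\<theta> > 0" and "a > 0"
  shows "\<exists>C>0. \<exists>\<tau>0>0. \<forall>s \<tau> \<xi> (u :: real \<times> real \<times> 'a::euclidean_space \<times> real \<Rightarrow> complex).
    s \<ge> 1 \<longrightarrow> \<tau> \<ge> \<tau>0 \<longrightarrow> C0_inf u \<longrightarrow>
    (let v = (\<lambda>x0 x1 y. uhat u x0 x1 y \<xi>);
         W = (\<lambda>x0. exp (2 * \<tau> * jb \<xi> powr (1 / s) * (x0 - a)))
     in (LINT x0:{0<..}|lborel. W x0 * nsq (Mop \<theta> \<xi> v x0))
        \<ge> C * W 0 * (\<tau> * jb \<xi> powr (1 / s) * E1 \<xi> v 0 + \<tau> ^ 3 * jb \<xi> powr (3 / s) * E0 \<xi> v 0)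
          + C * \<tau>\<^sup>2 * (LINT x0:{0<..}|lborel. W x0 * jb \<xi> powr (2 / s) * E1 \<xi> v x0)
          + C * \<tau> ^ 4 * (LINT x0:{0<..}|lborel. W x0 * jb \<xi> powr (4 / s) * E0 \<xi> v x0))"
proof (rule exI[of _ "1 / (8 + 2 / \<theta>)"], intro conjI)
  have th: "\<theta> > 0" by fact
  show "0 < 1 / (8 + 2 / \<theta>)" using th by (simp add: add_pos_pos)
  show "\<exists>\<tau>0>0. \<forall>s \<tau> \<xi> (u :: real \<times> real \<times> 'a::euclidean_space \<times> real \<Rightarrow> complex).
    s \<ge> 1 \<longrightarrow> \<tau> \<ge> \<tau>0 \<longrightarrow> C0_inf u \<longrightarrow>
    (let v = (\<lambda>x0 x1 y. uhat u x0 x1 y \<xi>);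
         W = (\<lambda>x0. exp (2 * \<tau> * jb \<xi> powr (1 / s) * (x0 - a)))
     in (LINT x0:{0<..}|lborel. W x0 * nsq (Mop \<theta> \<xi> v x0))
        \<ge> 1 / (8 + 2 / \<theta>) * W 0 * (\<tau> * jb \<xi> powr (1 / s) * E1 \<xi> v 0 + \<tau> ^ 3 * jb \<xi> powr (3 / s) * E0 \<xi> v 0)
          + 1 / (8 + 2 / \<theta>) * \<tau>\<^sup>2 * (LINT x0:{0<..}|lborel. W x0 * jb \<xi> powr (2 / s) * E1 \<xi> v x0)
          + 1 / (8 + 2 / \<theta>) * \<tau> ^ 4 * (LINT x0:{0<..}|lborel. W x0 * jb \<xi> powr (4 / s) * E0 \<xi> v x0))"
  proof (rule exI[of _ "1::real"], intro conjI allI impI)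
  show "(0::real) < 1" by simp
  fix s \<tau> \<xi> :: real and u :: "real \<times> real \<times> 'a::euclidean_space \<times> real \<Rightarrow> complex"
  assume s: "1 \<le> s" and tau: "1 \<le> \<tau>" and u: "C0_inf u"
  obtain U0 U00 U1 U11 U01 R where
    c: "continuous_on UNIV u" "continuous_on UNIV U0" "continuous_on UNIV U00" "continuous_on UNIV U1"
    "continuous_on UNIV U11" "continuous_on UNIV U01"
    and sp: "\<And>z. u z \<noteq> 0 \<Longrightarrow> norm z \<le> R" "\<And>z. U0 z \<noteq> 0 \<Longrightarrow> norm z \<le> R" "\<And>z. U00 z \<noteq> 0 \<Longrightarrow> norm z \<le> R"
    "\<And>z. U1 z \<noteq> 0 \<Longrightarrow> norm z \<le> R" "\<And>z. U11 z \<noteq> 0 \<Longrightarrow> norm z \<le> R" "\<And>z. U01 z \<noteq> 0 \<Longrightarrow> norm z \<le> R"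
    and d: "\<And>a b c d. ((\<lambda>t. u (t, b, c, d)) has_vector_derivative U0 (a, b, c, d)) (at a)"
    "\<And>a b c d. ((\<lambda>t. U0 (t, b, c, d)) has_vector_derivative U00 (a, b, c, d)) (at a)"
    "\<And>a b c d. ((\<lambda>t. u (a, t, c, d)) has_vector_derivative U1 (a, b, c, d)) (at b)"
    "\<And>a b c d. ((\<lambda>t. U1 (a, t, c, d)) has_vector_derivative U11 (a, b, c, d)) (at b)"
    "\<And>a b c d. ((\<lambda>t. U1 (t, b, c, d)) has_vector_derivative U01 (a, b, c, d)) (at a)"
    "\<And>a b c d. ((\<lambda>t. U0 (a, t, c, d)) has_vector_derivative U01 (a, b, c, d)) (at b)"
    apply (rule C0_partials[OF u])
    subgoal for U0 U00 U1 U11 U01 R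
      apply (rule that[of U0 U00 U1 U11 U01 R])
                        apply assumption+
      done
    done
  note nc = uhat_NC[OF c(1) sp(1), of \<xi>] uhat_NC[OF c(2) sp(2), of \<xi>] uhat_NC[OF c(3) sp(3), of \<xi>]
    uhat_NC[OF c(4) sp(4), of \<xi>] uhat_NC[OF c(5) sp(5), of \<xi>] uhat_NC[OF c(6) sp(6), of \<xi>]
  have tau0: "\<tau> > 0" using tau by simp
  have jbp: "jb \<xi> > 0" by (simp add: jb_def add_pos_nonneg)
  define lm where "lm = jb \<xi> powr (1 / s)"
  have lm: "lm > 0" using jbp by (simp add: lm_def)
  have pw: "jb \<xi> powr (real n / s) = lm ^ n" for n :: nat
  proof -
    have "lm ^ n = lm powr real n" using lm by (simp add: powr_realpow)
    also have "\<dots> = jb \<xi> powr (1 / s * real n)" unfolding lm_def by (simp add: powr_powr)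
    finally show ?thesis by simp
  qed
  have p2: "jb \<xi> powr (2 / s) = lm\<^sup>2" using pw[of 2] by simp
  have p3: "jb \<xi> powr (3 / s) = lm ^ 3" using pw[of 3] by simp
  have p4: "jb \<xi> powr (4 / s) = lm ^ 4" using pw[of 4] by simp
  note m = main_v[OF nc
      uhat_deriv0[OF c(1) sp(1) c(2) sp(2) d(1)] uhat_deriv0[OF c(2) sp(2) c(3) sp(3) d(2)]
      uhat_deriv1[OF c(1) sp(1) c(4) sp(4) d(3)] uhat_deriv1[OF c(4) sp(4) c(5) sp(5) d(4)]
      uhat_deriv0[OF c(4) sp(4) c(6) sp(6) d(5)] uhat_deriv1[OF c(2) sp(2) c(6) sp(6) d(6)]
      th tau0 lm, of a]
  show "let v = (\<lambda>x0 x1 y. uhat u x0 x1 y \<xi>);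
         W = (\<lambda>x0. exp (2 * \<tau> * jb \<xi> powr (1 / s) * (x0 - a)))
     in (LINT x0:{0<..}|lborel. W x0 * nsq (Mop \<theta> \<xi> v x0))
        \<ge> 1 / (8 + 2 / \<theta>) * W 0 * (\<tau> * jb \<xi> powr (1 / s) * E1 \<xi> v 0 + \<tau> ^ 3 * jb \<xi> powr (3 / s) * E0 \<xi> v 0)
          + 1 / (8 + 2 / \<theta>) * \<tau>\<^sup>2 * (LINT x0:{0<..}|lborel. W x0 * jb \<xi> powr (2 / s) * E1 \<xi> v x0)
          + 1 / (8 + 2 / \<theta>) * \<tau> ^ 4 * (LINT x0:{0<..}|lborel. W x0 * jb \<xi> powr (4 / s) * E0 \<xi> v x0)"
    unfolding Let_def p2 p3 p4 lm_def[symmetric] using m by simp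
  qed
qed

end
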